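(* Let $(d_n)$ be integers with $d_n\ge2$ and $d_n\to\infty$, and let $\boldsymbol{X}_{n,1},\boldsymbol{X}_{n,2}$ be independent random vectors uniformly distributed on $\mathbb{S}^{d_n}$. For any integers $k,m\ge1$, as $d_n\to\infty$, $$\mathrm{E}\Big[\big(C_k^{(d_n-1)/2}(\boldsymbol{X}_{n,1}^\top\boldsymbol{X}_{n,2})\big)^{2m}\Big]\asymp d_n^{mk}\quad\text{and}\quad d_{k,d_n}\sim\Big(1+\frac{2k}{d_n-1}\Big)\frac{d_n^k}{k!}.$$
   Context: $C_k^{(\lambda)}$ is the Gegenbauer polynomial of degree $k$ and index $\lambda$. $d_{k,d}:=\binom{d+k-2}{d-1}+\binom{d+k-1}{d-1}=\big(1+\frac{2k}{d-1}\big)\frac{\Gamma(d-1+k)}{\Gamma(d-1)k!}$. For sequences, $a_n\asymp b_n$ means $a_n/b_n\to c$ for some constant $c\neq0$, and $a_n\sim b_n$ means $a_n/b_n\to1$. *)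

theory Defs
  imports "HOL-Probability.Probability"
begin

definition gegenbauer :: "nat \<Rightarrow> real \<Rightarrow> real \<Rightarrow> real" where
  "gegenbauer k lam x =
     (\<Sum>j\<le>k div 2. (-1)^j * pochhammer lam (k - j) / (fact j * fact (k - 2*j)) * (2*x)^(k - 2*j))"

definition dim_harm :: "nat \<Rightarrow> nat \<Rightarrow> real" where
  "dim_harm k d = real ((d + k - 2) choose (d - 1)) + real ((d + k - 1) choose (d - 1))"

text \<open>Euclidean space R^(d+1), vectors indexed by {..d}.\<close>
definition euclid :: "nat \<Rightarrow> (nat \<Rightarrow> real) measure" where
  "euclid d = PiM {..d} (\<lambda>_. lborel)"

definition sqnorm :: "nat \<Rightarrow> (nat \<Rightarrow> real) \<Rightarrow> real" where
  "sqnorm d x = (\<Sum>i\<le>d. (x i)^2)"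

text \<open>Uniform distribution on the unit sphere S^d in R^(d+1): the normalized surface
  (= cone) measure, i.e. the push-forward of the uniform distribution on the closed unit
  ball under radial projection x \<mapsto> x/|x|.\<close>
definition sphere_unif :: "nat \<Rightarrow> (nat \<Rightarrow> real) measure" where
  "sphere_unif d =
     distr (uniform_measure (euclid d) {x \<in> space (euclid d). sqnorm d x \<le> 1})
           (euclid d) (\<lambda>x. \<lambda>i\<in>{..d}. x i / sqrt (sqnorm d x))"

definition gegen_moment :: "nat \<Rightarrow> nat \<Rightarrow> nat \<Rightarrow> real" where
  "gegen_moment d k m =
     (\<integral>p. (gegenbauer k ((real d - 1) / 2) (\<Sum>i\<le>d. fst p i * snd p i)) ^ (2*m)
        \<partial>(sphere_unif d \<Otimes>\<^sub>M sphere_unif d))"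

end

theory Submission
  imports Defs "HOL-Computational_Algebra.Polynomial"
begin

interpretation lbpr: product_sigma_finite "\<lambda>_::nat. lborel::real measure"
  by standard

definition sc :: "nat \<Rightarrow> real \<Rightarrow> (nat \<Rightarrow> real) \<Rightarrow> (nat \<Rightarrow> real)" where
  "sc d c x = (\<lambda>i\<in>{..d}. c * x i)"

lemma space_euclid: "space (euclid d) = PiE {..d} (\<lambda>_. UNIV)"
  by (simp add: euclid_def space_PiM)

lemma sets_euclid: "sets (euclid d) = sets (PiM {..d} (\<lambda>_. lborel))"
  by (simp add: euclid_def)

lemma measurable_sc[measurable]: "sc d c \<in> euclid d \<rightarrow>\<^sub>M euclid d"
  unfolding sc_def euclid_def by measurable

lemma sigma_finite_euclid: "sigma_finite_measure (euclid d)"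
  unfolding euclid_def
  by (rule lbpr.sigma_finite) simp

lemma lborel_preimage_mult:
  assumes "(c::real) > 0" "A \<in> sets lborel"
  shows "emeasure lborel ({t. c * t \<in> A}) = ennreal (1/c) * emeasure lborel A"
proof -
  have "emeasure lborel ({t. c * t \<in> A}) = emeasure (distr lborel borel ((*) c)) A"
    using assms by (subst emeasure_distr) (auto simp: vimage_def)
  also have "\<dots> = emeasure (density lborel (\<lambda>_. inverse \<bar>c\<bar>)) A"
    using assms by (simp add: lborel_distr_mult)
  also have "\<dots> = ennreal (1/c) * emeasure lborel A"
    using assms by (subst emeasure_density_const) (auto simp: divide_inverse)
  finally show ?thesis .
qed

lemma scale_density:
  assumes c: "c > 0"
  shows "density (distr (euclid d) (euclid d) (sc d c)) (\<lambda>_. ennreal (c ^ Suc d)) = euclid d"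
  unfolding euclid_def
proof (rule lbpr.PiM_eqI)
  show "finite {..d}" by simp
  show "sets (density (distr (Pi\<^sub>M {..d} (\<lambda>_. lborel)) (Pi\<^sub>M {..d} (\<lambda>_. lborel)) (sc d c)) (\<lambda>_. ennreal (c ^ Suc d)))
     = sets (Pi\<^sub>M {..d} (\<lambda>_. lborel))" by simp
  fix A :: "nat \<Rightarrow> real set" assume A: "\<And>i. i \<in> {..d} \<Longrightarrow> A i \<in> sets lborel"
  have box: "Pi\<^sub>E {..d} A \<in> sets (Pi\<^sub>M {..d} (\<lambda>_. lborel))"
    using A by (intro sets_PiM_I_finite) auto
  have pre: "sc d c -` Pi\<^sub>E {..d} A \<inter> space (Pi\<^sub>M {..d} (\<lambda>_. lborel)) = Pi\<^sub>E {..d} (\<lambda>i. {t. c * t \<in> A i})"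
    by (auto simp: sc_def space_PiM PiE_def Pi_def extensional_def)
  have box2: "Pi\<^sub>E {..d} (\<lambda>i. {t. c * t \<in> A i}) \<in> sets (Pi\<^sub>M {..d} (\<lambda>_. lborel))"
    using pre[symmetric] box measurable_sc[of d c] unfolding euclid_def
    by (metis measurable_sets)
  have "emeasure (density (distr (Pi\<^sub>M {..d} (\<lambda>_. lborel)) (Pi\<^sub>M {..d} (\<lambda>_. lborel)) (sc d c)) (\<lambda>_. ennreal (c ^ Suc d))) (Pi\<^sub>E {..d} A)
      = ennreal (c ^ Suc d) * emeasure (Pi\<^sub>M {..d} (\<lambda>_. lborel)) (Pi\<^sub>E {..d} (\<lambda>i. {t. c * t \<in> A i}))"
    using box measurable_sc[of d c] pre unfolding euclid_def
    by (simp add: emeasure_density_const emeasure_distr)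
  also have "\<dots> = ennreal (c ^ Suc d) * (\<Prod>i\<in>{..d}. ennreal (1/c) * emeasure lborel (A i))"
  proof -
    have "\<And>i. i \<in> {..d} \<Longrightarrow> {t. c * t \<in> A i} \<in> sets lborel"
    proof -
      fix i assume "i \<in> {..d}"
      then have "A i \<in> sets borel" using A by simp
      then show "{t. c * t \<in> A i} \<in> sets lborel"
        using measurable_sets[of "(*) c" borel borel "A i"] by (simp add: vimage_def)
    qed
    then have "emeasure (Pi\<^sub>M {..d} (\<lambda>_. lborel)) (Pi\<^sub>E {..d} (\<lambda>i. {t. c * t \<in> A i}))
       = (\<Prod>i\<in>{..d}. emeasure lborel {t. c * t \<in> A i})"
      by (intro lbpr.emeasure_PiM) auto
    also have "\<dots> = (\<Prod>i\<in>{..d}. ennreal (1/c) * emeasure lborel (A i))"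
      using A c by (intro prod.cong refl lborel_preimage_mult) auto
    finally show ?thesis by simp
  qed
  also have "\<dots> = (\<Prod>i\<in>{..d}. emeasure lborel (A i))"
  proof -
    have "(\<Prod>i\<in>{..d}. ennreal (1/c) * emeasure lborel (A i)) = ennreal (1/c) ^ Suc d * (\<Prod>i\<in>{..d}. emeasure lborel (A i))"
      by (simp add: prod.distrib)
    moreover have "ennreal (c ^ Suc d) * ennreal (1/c) ^ Suc d = 1"
    proof -
      have "ennreal (1/c) ^ Suc d = ennreal ((1/c) ^ Suc d)"
        using c by (intro ennreal_power) simp
      moreover have "ennreal (c ^ Suc d) * ennreal ((1/c) ^ Suc d) = ennreal (c ^ Suc d * (1/c) ^ Suc d)"
        using c by (intro ennreal_mult[symmetric]) auto
      ultimately have "ennreal (c ^ Suc d) * ennreal (1/c) ^ Suc d = ennreal (c ^ Suc d * (1/c) ^ Suc d)"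
        by metis
      also have "c ^ Suc d * (1/c) ^ Suc d = 1"
        using c by (simp add: power_mult_distrib[symmetric])
      finally show ?thesis by simp
    qed
    ultimately show ?thesis by (simp add: mult.assoc[symmetric])
  qed
  finally show "emeasure (density (distr (Pi\<^sub>M {..d} (\<lambda>_. lborel)) (Pi\<^sub>M {..d} (\<lambda>_. lborel)) (sc d c)) (\<lambda>_. ennreal (c ^ Suc d))) (Pi\<^sub>E {..d} A)
      = (\<Prod>i\<in>{..d}. emeasure lborel (A i))" .
qed

lemma nn_integral_scale:
  assumes c: "c > 0" and f[measurable]: "f \<in> borel_measurable (euclid d)"
  shows "(\<integral>\<^sup>+x. f x \<partial>euclid d) = ennreal (c ^ Suc d) * (\<integral>\<^sup>+x. f (sc d c x) \<partial>euclid d)"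
proof -
  have "(\<integral>\<^sup>+x. f x \<partial>euclid d) = (\<integral>\<^sup>+x. f x \<partial>density (distr (euclid d) (euclid d) (sc d c)) (\<lambda>_. ennreal (c ^ Suc d)))"
    using scale_density[OF c, of d] by simp
  also have "\<dots> = (\<integral>\<^sup>+x. ennreal (c ^ Suc d) * f x \<partial>distr (euclid d) (euclid d) (sc d c))"
    by (subst nn_integral_density) auto
  also have "\<dots> = (\<integral>\<^sup>+x. ennreal (c ^ Suc d) * f (sc d c x) \<partial>euclid d)"
    by (subst nn_integral_distr) auto
  also have "\<dots> = ennreal (c ^ Suc d) * (\<integral>\<^sup>+x. f (sc d c x) \<partial>euclid d)"
    by (rule nn_integral_cmult) auto
  finally show ?thesis .
qed

lemma measurable_sqnorm[measurable]: "sqnorm d \<in> borel_measurable (euclid d)"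
  unfolding sqnorm_def[abs_def] euclid_def
  by (intro borel_measurable_sum) measurable

lemma sqnorm_nonneg: "sqnorm d x \<ge> 0"
  unfolding sqnorm_def by (intro sum_nonneg) auto

lemma sqnorm_sc: "sqnorm d (sc d c x) = c^2 * sqnorm d x"
  unfolding sqnorm_def sc_def by (simp add: sum_distrib_left power_mult_distrib)

lemma sc_space: "x \<in> space (euclid d) \<Longrightarrow> sc d c x \<in> space (euclid d)"
  by (rule measurable_space[OF measurable_sc])

definition hom :: "nat \<Rightarrow> nat \<Rightarrow> ((nat \<Rightarrow> real) \<Rightarrow> ennreal) \<Rightarrow> bool" where
  "hom d s g \<longleftrightarrow> (\<forall>x\<in>space (euclid d). \<forall>c>0. g (sc d c x) = ennreal (c ^ s) * g x)"

lemma ball_scale: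
  assumes h: "hom d s g" and g[measurable]: "g \<in> borel_measurable (euclid d)" and r: "r > 0"
  shows "(\<integral>\<^sup>+x. g x * indicator {x. sqnorm d x \<le> r^2} x \<partial>euclid d)
       = ennreal (r ^ (Suc d + s)) * (\<integral>\<^sup>+x. g x * indicator {x. sqnorm d x \<le> 1} x \<partial>euclid d)"
proof -
  have "(\<integral>\<^sup>+x. g x * indicator {x. sqnorm d x \<le> r^2} x \<partial>euclid d)
     = ennreal (r ^ Suc d) * (\<integral>\<^sup>+x. g (sc d r x) * indicator {x. sqnorm d x \<le> r^2} (sc d r x) \<partial>euclid d)"
    using r by (intro nn_integral_scale) auto
  also have "(\<integral>\<^sup>+x. g (sc d r x) * indicator {x. sqnorm d x \<le> r^2} (sc d r x) \<partial>euclid d)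
      = (\<integral>\<^sup>+x. ennreal (r ^ s) * (g x * indicator {x. sqnorm d x \<le> 1} x) \<partial>euclid d)"
  proof (intro nn_integral_cong)
    fix x assume x: "x \<in> space (euclid d)"
    have "(sqnorm d (sc d r x) \<le> r^2) = (sqnorm d x \<le> 1)"
      using r by (simp add: sqnorm_sc)
    then show "g (sc d r x) * indicator {x. sqnorm d x \<le> r^2} (sc d r x) = ennreal (r ^ s) * (g x * indicator {x. sqnorm d x \<le> 1} x)"
      using h x r unfolding hom_def by (simp add: indicator_def mult.assoc)
  qed
  also have "\<dots> = ennreal (r ^ s) * (\<integral>\<^sup>+x. g x * indicator {x. sqnorm d x \<le> 1} x \<partial>euclid d)"
    by (rule nn_integral_cmult) auto
  moreover have "ennreal (r ^ (Suc d + s)) = ennreal (r ^ Suc d) * ennreal (r ^ s)"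
    using r by (simp add: ennreal_mult[symmetric] power_add[symmetric] del: power_Suc)
  ultimately show ?thesis
    by (simp add: mult.assoc del: power_Suc)
qed

lemma pair_sf: "pair_sigma_finite (euclid d) (lborel::real measure)"
  using sigma_finite_euclid[of d]
  by (simp add: pair_sigma_finite_def lborel.sigma_finite_measure_axioms)

lemma layer:
  assumes h: "hom d s g" and g[measurable]: "g \<in> borel_measurable (euclid d)"
    and nu[measurable]: "nu \<in> borel_measurable (borel :: real measure)"
  shows "(\<integral>\<^sup>+x. g x * (\<integral>\<^sup>+r. nu r * indicator {0<..} r * indicator {x. sqnorm d x \<le> r^2} x \<partial>lborel) \<partial>euclid d)
       = (\<integral>\<^sup>+r. nu r * indicator {0<..} r * ennreal (r ^ (Suc d + s)) \<partial>lborel)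
         * (\<integral>\<^sup>+x. g x * indicator {x. sqnorm d x \<le> 1} x \<partial>euclid d)"
proof -
  interpret P: pair_sigma_finite "euclid d" "lborel::real measure" by (rule pair_sf)
  have "(\<integral>\<^sup>+x. g x * (\<integral>\<^sup>+r. nu r * indicator {0<..} r * indicator {x. sqnorm d x \<le> r^2} x \<partial>lborel) \<partial>euclid d)
      = (\<integral>\<^sup>+x. (\<integral>\<^sup>+r. nu r * indicator {0<..} r * (g x * indicator {x. sqnorm d x \<le> r^2} x) \<partial>lborel) \<partial>euclid d)"
    by (intro nn_integral_cong) (simp add: nn_integral_cmult[symmetric] mult_ac)
  also have "\<dots> = (\<integral>\<^sup>+r. (\<integral>\<^sup>+x. nu r * indicator {0<..} r * (g x * indicator {x. sqnorm d x \<le> r^2} x) \<partial>euclid d) \<partial>lborel)"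
    by (intro P.Fubini'[symmetric]) measurable
  also have "\<dots> = (\<integral>\<^sup>+r. nu r * indicator {0<..} r * ennreal (r ^ (Suc d + s)) *
         (\<integral>\<^sup>+x. g x * indicator {x. sqnorm d x \<le> 1} x \<partial>euclid d) \<partial>lborel)"
  proof (intro nn_integral_cong)
    fix r :: real
    show "(\<integral>\<^sup>+x. nu r * indicator {0<..} r * (g x * indicator {x. sqnorm d x \<le> r^2} x) \<partial>euclid d)
       = nu r * indicator {0<..} r * ennreal (r ^ (Suc d + s)) * (\<integral>\<^sup>+x. g x * indicator {x. sqnorm d x \<le> 1} x \<partial>euclid d)"
    proof (cases "r > 0")
      case True
      then show ?thesis
        by (subst nn_integral_cmult) (auto simp: ball_scale[OF h g True] mult.assoc)
    qed simp
  qed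
  also have "\<dots> = (\<integral>\<^sup>+r. nu r * indicator {0<..} r * ennreal (r ^ (Suc d + s)) \<partial>lborel)
         * (\<integral>\<^sup>+x. g x * indicator {x. sqnorm d x \<le> 1} x \<partial>euclid d)"
    by (rule nn_integral_multc) measurable
  finally show ?thesis .
qed

lemma gauss_profile:
  assumes a: "a \<ge> 0"
  shows "(\<integral>\<^sup>+r. ennreal (2*r*exp(- (r\<^sup>2))) * indicator {0<..} r * (if a \<le> r\<^sup>2 then 1 else 0) \<partial>lborel) = ennreal (exp (-a))"
proof -
  have "(\<integral>\<^sup>+r. ennreal (2*r*exp(- (r\<^sup>2))) * indicator {0<..} r * (if a \<le> r\<^sup>2 then 1 else 0) \<partial>lborel)
      = (\<integral>\<^sup>+r\<in>{sqrt a..}. ennreal (2*r*exp(- (r\<^sup>2))) \<partial>lborel)"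
  proof (intro nn_integral_cong_AE)
    show "AE r in lborel. ennreal (2*r*exp(- (r\<^sup>2))) * indicator {0<..} r * (if a \<le> r\<^sup>2 then 1 else 0)
        = ennreal (2*r*exp(- (r\<^sup>2))) * indicator {sqrt a..} r"
      using AE_lborel_singleton[of "0::real"]
    proof eventually_elim
      case (elim r)
      show ?case
      proof (cases "r > 0")
        case True
        then have "(a \<le> r\<^sup>2) = (sqrt a \<le> r)"
        proof -
          have "sqrt (r\<^sup>2) = r" using True by simp
          moreover have "(a \<le> r\<^sup>2) = (sqrt a \<le> sqrt (r\<^sup>2))" by (simp only: real_sqrt_le_iff)
          ultimately show ?thesis by simp
        qed
        then show ?thesis using True by (auto simp: indicator_def)
      next
        case False
        then have "r < 0" using elim by simp
        moreover have "sqrt a \<ge> 0" using a by simp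
        ultimately have "\<not> sqrt a \<le> r" by linarith
        then show ?thesis using \<open>r < 0\<close> by (auto simp: indicator_def)
      qed
    qed
  qed
  also have "\<dots> = ennreal (0 - (- exp (- ((sqrt a)\<^sup>2))))"
  proof (rule nn_integral_FTC_atLeast)
    show "(\<lambda>r::real. 2*r*exp(- (r\<^sup>2))) \<in> borel_measurable borel" by measurable
    show "((\<lambda>r::real. - exp (- r\<^sup>2)) has_real_derivative 2*x*exp(- (x\<^sup>2))) (at x)" for x
      by (auto intro!: derivative_eq_intros)
    show "sqrt a \<le> x \<Longrightarrow> 0 \<le> 2*x*exp(- (x\<^sup>2))" for x
    proof -
      assume "sqrt a \<le> x"
      moreover have "0 \<le> sqrt a" using a by simp
      ultimately have "0 \<le> x" by linarith
      then show ?thesis by simp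
    qed
    show "((\<lambda>r::real. - exp (- r\<^sup>2)) \<longlongrightarrow> 0) at_top"
    proof -
      have "((\<lambda>r::real. - exp (- r\<^sup>2)) \<longlongrightarrow> - 0) at_top"
        by (intro tendsto_minus filterlim_compose[OF exp_at_bot]
                   filterlim_compose[OF filterlim_uminus_at_bot_at_top]
                   filterlim_pow_at_top filterlim_ident) auto
      then show ?thesis by simp
    qed
  qed
  also have "\<dots> = ennreal (exp (-a))" using a by simp
  finally show ?thesis .
qed

lemma ball_profile:
  assumes a: "a \<ge> 0" and s: "s = 2*q"
  shows "(\<integral>\<^sup>+r. ennreal (real s * r^(s-1)) * indicator {..1} r * indicator {0<..} r * (if a \<le> r\<^sup>2 then 1 else 0) \<partial>lborel)
     = ennreal (1 - a^q) * indicator {x. x \<le> 1} a"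
proof (cases "a \<le> 1")
  case False
  have "(\<integral>\<^sup>+r. ennreal (real s * r^(s-1)) * indicator {..1} r * indicator {0<..} r * (if a \<le> r\<^sup>2 then 1 else 0) \<partial>lborel)
     = (\<integral>\<^sup>+r. 0 \<partial>lborel)"
  proof -
    have "ennreal (real s * r^(s-1)) * indicator {..1} r * indicator {0<..} r * (if a \<le> r\<^sup>2 then 1 else 0) = 0" for r :: real
    proof (cases "0 < r \<and> r \<le> 1")
      case True
      then have "r\<^sup>2 \<le> 1" by (simp add: power_le_one)
      then show ?thesis using False by (auto simp: indicator_def)
    qed (auto simp: indicator_def)
    then have "(\<lambda>r::real. ennreal (real s * r^(s-1)) * indicator {..1} r * indicator {0<..} r * (if a \<le> r\<^sup>2 then 1 else 0)) = (\<lambda>_. 0)"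
      by (intro ext)
    then show ?thesis by simp
  qed
  then show ?thesis using False by simp
next
  case True
  have "(\<integral>\<^sup>+r. ennreal (real s * r^(s-1)) * indicator {..1} r * indicator {0<..} r * (if a \<le> r\<^sup>2 then 1 else 0) \<partial>lborel)
      = (\<integral>\<^sup>+r\<in>{sqrt a..1}. ennreal (real s * r^(s-1)) \<partial>lborel)"
  proof (intro nn_integral_cong_AE)
    show "AE r in lborel. ennreal (real s * r^(s-1)) * indicator {..1} r * indicator {0<..} r * (if a \<le> r\<^sup>2 then 1 else 0)
        = ennreal (real s * r^(s-1)) * indicator {sqrt a..1} r"
      using AE_lborel_singleton[of "0::real"]
    proof eventually_elim
      case (elim r)
      show ?case
      proof (cases "r > 0")
        case True
        then have "(a \<le> r\<^sup>2) = (sqrt a \<le> r)"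
        proof -
          have "sqrt (r\<^sup>2) = r" using True by simp
          moreover have "(a \<le> r\<^sup>2) = (sqrt a \<le> sqrt (r\<^sup>2))" by (simp only: real_sqrt_le_iff)
          ultimately show ?thesis by simp
        qed
        then show ?thesis using True by (auto simp: indicator_def)
      next
        case False
        then have "r < 0" using elim by simp
        moreover have "sqrt a \<ge> 0" using a by simp
        ultimately have "\<not> sqrt a \<le> r" by linarith
        then show ?thesis using \<open>r < 0\<close> by (auto simp: indicator_def)
      qed
    qed
  qed
  also have "\<dots> = ennreal (1 ^ s - (sqrt a) ^ s)"
  proof (rule nn_integral_FTC_Icc)
    show "(\<lambda>r::real. real s * r^(s-1)) \<in> borel_measurable borel" by measurable
    show "((\<lambda>r::real. r ^ s) has_real_derivative real s * x^(s-1)) (at x)" for x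
      using DERIV_pow[of s x] by simp
    show "x \<in> {sqrt a..1} \<Longrightarrow> 0 \<le> real s * x^(s-1)" for x
      using a by (simp add: order_trans[OF real_sqrt_ge_zero])
    show "sqrt a \<le> 1" using True by simp
  qed
  also have "(sqrt a) ^ s = a ^ q"
    using a s by (simp add: power_mult)
  finally show ?thesis using True by simp
qed

lemma ball_radial_integral:
  assumes s: "s \<ge> 1"
  shows "(\<integral>\<^sup>+r. ennreal (real s * r^(s-1)) * indicator {..1} r * indicator {0<..} r * ennreal (r ^ (Suc d + 0)) \<partial>lborel)
     = ennreal (real s / (real s + real (Suc d)))"
proof -
  have "(\<integral>\<^sup>+r. ennreal (real s * r^(s-1)) * indicator {..1} r * indicator {0<..} r * ennreal (r ^ (Suc d + 0)) \<partial>lborel)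
      = (\<integral>\<^sup>+r\<in>{0..1}. ennreal (real s * r^(s-1+Suc d)) \<partial>lborel)"
  proof (intro nn_integral_cong_AE)
    show "AE r in lborel. ennreal (real s * r^(s-1)) * indicator {..1} r * indicator {0<..} r * ennreal (r ^ (Suc d + 0))
        = ennreal (real s * r^(s-1+Suc d)) * indicator {0..1} r"
      using AE_lborel_singleton[of "0::real"]
    proof eventually_elim
      case (elim r)
      show ?case
      proof (cases "r > 0")
        case True
        then show ?thesis
          by (auto simp: indicator_def ennreal_mult[symmetric] power_add)
      qed (use elim in \<open>auto simp: indicator_def\<close>)
    qed
  qed
  also have "\<dots> = ennreal (real s / (real s + real (Suc d)) * 1 ^ (s + Suc d) - real s / (real s + real (Suc d)) * 0 ^ (s + Suc d))"
  proof (rule nn_integral_FTC_Icc)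
    show "(\<lambda>r::real. real s * r^(s-1+Suc d)) \<in> borel_measurable borel" by measurable
    show "((\<lambda>r::real. real s / (real s + real (Suc d)) * r ^ (s + Suc d)) has_real_derivative real s * x^(s-1+Suc d)) (at x)" for x
    proof -
      have "((\<lambda>r::real. real s / (real s + real (Suc d)) * r ^ (s + Suc d)) has_real_derivative
              real s / (real s + real (Suc d)) * (real (s + Suc d) * x ^ (s + Suc d - 1))) (at x)"
        using DERIV_pow[of "s + Suc d" x] by (intro DERIV_cmult) simp
      moreover have "real s / (real s + real (Suc d)) * (real (s + Suc d) * x ^ (s + Suc d - 1)) = real s * x^(s-1+Suc d)"
        using s by (simp add: field_simps)
      ultimately show ?thesis by simp
    qed
    show "x \<in> {0..1} \<Longrightarrow> 0 \<le> real s * x^(s-1+Suc d)" for x by simp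
  qed simp
  also have "\<dots> = ennreal (real s / (real s + real (Suc d)))" using s by simp
  finally show ?thesis .
qed

definition gsd :: real where "gsd = sqrt (1/2)"

definition ND :: "real measure" where "ND = density lborel (normal_density 0 gsd)"

definition NG :: "nat \<Rightarrow> (nat \<Rightarrow> real) measure" where
  "NG d = PiM {..d} (\<lambda>_. ND)"

lemma gsd_pos: "gsd > 0" by (simp add: gsd_def)

lemma gsd_sq: "gsd\<^sup>2 = 1/2" by (simp add: gsd_def)

lemma nd_eq: "normal_density 0 gsd x = exp (- (x\<^sup>2)) / sqrt pi"
  using gsd_pos by (simp add: normal_density_def gsd_sq)

lemma prob_space_ND: "prob_space ND"
  unfolding ND_def using gsd_pos by (intro prob_space_normal_density) simp

lemma prob_space_NG: "prob_space (NG d)"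
  unfolding NG_def by (intro prob_space_PiM) (simp add: prob_space_ND)

lemma sets_NG: "sets (NG d) = sets (euclid d)"
  unfolding NG_def euclid_def ND_def by (intro sets_PiM_cong) auto

lemma space_NG: "space (NG d) = space (euclid d)"
  using sets_NG sets_eq_imp_space_eq by blast

definition gdens :: "nat \<Rightarrow> (nat \<Rightarrow> real) \<Rightarrow> real" where
  "gdens d x = (1 / sqrt pi) ^ Suc d * exp (- sqnorm d x)"

lemma gdens_prod: "gdens d x = (\<Prod>i\<in>{..d}. normal_density 0 gsd (x i))"
proof -
  have "(\<Prod>i\<in>{..d}. normal_density 0 gsd (x i)) = (\<Prod>i\<in>{..d}. (1 / sqrt pi) * exp (- ((x i)\<^sup>2)))"
    by (intro prod.cong refl) (simp add: nd_eq)
  also have "\<dots> = (1 / sqrt pi) ^ Suc d * (\<Prod>i\<in>{..d}. exp (- ((x i)\<^sup>2)))"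
    by (subst prod.distrib) (simp add: prod_constant)
  also have "(\<Prod>i\<in>{..d}. exp (- ((x i)\<^sup>2))) = exp (- sqnorm d x)"
    unfolding sqnorm_def by (simp add: exp_sum[symmetric] sum_negf)
  finally show ?thesis unfolding gdens_def by simp
qed

lemma NG_density: "NG d = density (euclid d) (\<lambda>x. ennreal (gdens d x))"
proof -
  interpret ndpr2: product_sigma_finite "\<lambda>_::nat. ND"
    unfolding product_sigma_finite_def
    by (intro allI prob_space_imp_sigma_finite[OF prob_space_ND])
  show ?thesis
  unfolding NG_def
  proof (rule ndpr2.PiM_eqI[symmetric])
    show "finite {..d}" by simp
    show "sets (density (euclid d) (\<lambda>x. ennreal (gdens d x))) = sets (Pi\<^sub>M {..d} (\<lambda>_. ND))"
      unfolding euclid_def sets_density by (intro sets_PiM_cong) (auto simp: ND_def)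
    fix A :: "nat \<Rightarrow> real set" assume A: "\<And>i. i \<in> {..d} \<Longrightarrow> A i \<in> sets ND"
    then have Al: "\<And>i. i \<in> {..d} \<Longrightarrow> A i \<in> sets lborel" by (simp add: ND_def)
    have box: "Pi\<^sub>E {..d} A \<in> sets (euclid d)"
      unfolding euclid_def using Al by (intro sets_PiM_I_finite) auto
    have "emeasure (density (euclid d) (\<lambda>x. ennreal (gdens d x))) (Pi\<^sub>E {..d} A)
        = (\<integral>\<^sup>+x. ennreal (gdens d x) * indicator (Pi\<^sub>E {..d} A) x \<partial>euclid d)"
      using box by (subst emeasure_density) (auto simp: gdens_def)
    also have "\<dots> = (\<integral>\<^sup>+x. (\<Prod>i\<in>{..d}. ennreal (normal_density 0 gsd (x i)) * indicator (A i) (x i)) \<partial>euclid d)"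
    proof (intro nn_integral_cong)
      fix x assume x: "x \<in> space (euclid d)"
      have "indicator (Pi\<^sub>E {..d} A) x = (\<Prod>i\<in>{..d}. indicator (A i) (x i) :: ennreal)"
      proof (cases "\<forall>i\<in>{..d}. x i \<in> A i")
        case True
        then show ?thesis using x by (simp add: space_euclid indicator_def PiE_def)
      next
        case False
        then obtain i where i: "i \<in> {..d}" "x i \<notin> A i" by blast
        then have "(\<Prod>i\<in>{..d}. indicator (A i) (x i) :: ennreal) = 0"
          by (intro prod_zero) (auto intro!: bexI[of _ i])
        moreover have "x \<notin> Pi\<^sub>E {..d} A" using i by (auto simp: PiE_def)
        ultimately show ?thesis by simp
      qed
      moreover have "ennreal (gdens d x) = (\<Prod>i\<in>{..d}. ennreal (normal_density 0 gsd (x i)))"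
        by (simp add: gdens_prod prod_ennreal)
      ultimately show "ennreal (gdens d x) * indicator (Pi\<^sub>E {..d} A) x
          = (\<Prod>i\<in>{..d}. ennreal (normal_density 0 gsd (x i)) * indicator (A i) (x i))"
        by (simp add: prod.distrib)
    qed
    also have "\<dots> = (\<Prod>i\<in>{..d}. \<integral>\<^sup>+t. ennreal (normal_density 0 gsd t) * indicator (A i) t \<partial>lborel)"
      unfolding euclid_def using Al
      by (intro lbpr.product_nn_integral_prod) auto
    also have "\<dots> = (\<Prod>i\<in>{..d}. emeasure ND (A i))"
      unfolding ND_def using Al by (intro prod.cong refl) (simp add: emeasure_density)
    finally show "emeasure (density (euclid d) (\<lambda>x. ennreal (gdens d x))) (Pi\<^sub>E {..d} A) = (\<Prod>i\<in>{..d}. emeasure ND (A i))" .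
  qed
qed

definition Tb :: "nat \<Rightarrow> ((nat \<Rightarrow> real) \<Rightarrow> ennreal) \<Rightarrow> ennreal" where
  "Tb d g = (\<integral>\<^sup>+x. g x * indicator {x. sqnorm d x \<le> 1} x \<partial>euclid d)"

definition Kn :: "nat \<Rightarrow> nat \<Rightarrow> ennreal" where
  "Kn d s = (\<integral>\<^sup>+r. ennreal (2*r*exp(- (r\<^sup>2))) * indicator {0<..} r * ennreal (r ^ (Suc d + s)) \<partial>lborel)"

lemma measurable_gdens[measurable]: "gdens d \<in> borel_measurable (euclid d)"
  unfolding gdens_def by measurable

lemma NG_layer:
  assumes h: "hom d s g" and g[measurable]: "g \<in> borel_measurable (euclid d)"
  shows "(\<integral>\<^sup>+x. g x \<partial>NG d) = ennreal ((1 / sqrt pi) ^ Suc d) * (Kn d s * Tb d g)"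
proof -
  have "(\<integral>\<^sup>+x. g x \<partial>NG d) = (\<integral>\<^sup>+x. ennreal (gdens d x) * g x \<partial>euclid d)"
    unfolding NG_density by (subst nn_integral_density) auto
  also have "\<dots> = (\<integral>\<^sup>+x. ennreal ((1 / sqrt pi) ^ Suc d) *
       (g x * (\<integral>\<^sup>+r. ennreal (2*r*exp(- (r\<^sup>2))) * indicator {0<..} r * indicator {x. sqnorm d x \<le> r\<^sup>2} x \<partial>lborel)) \<partial>euclid d)"
  proof (intro nn_integral_cong)
    fix x
    have "(\<integral>\<^sup>+r. ennreal (2*r*exp(- (r\<^sup>2))) * indicator {0<..} r * indicator {x. sqnorm d x \<le> r\<^sup>2} x \<partial>lborel)
        = ennreal (exp (- sqnorm d x))"
      using gauss_profile[OF sqnorm_nonneg[of d x]] by (simp add: indicator_def of_bool_def)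
    moreover have "ennreal (gdens d x) = ennreal ((1 / sqrt pi) ^ Suc d) * ennreal (exp (- sqnorm d x))"
      unfolding gdens_def by (intro ennreal_mult) auto
    ultimately show "ennreal (gdens d x) * g x = ennreal ((1 / sqrt pi) ^ Suc d) *
       (g x * (\<integral>\<^sup>+r. ennreal (2*r*exp(- (r\<^sup>2))) * indicator {0<..} r * indicator {x. sqnorm d x \<le> r\<^sup>2} x \<partial>lborel))"
      by (simp add: mult_ac)
  qed
  also have "\<dots> = ennreal ((1 / sqrt pi) ^ Suc d) *
       (\<integral>\<^sup>+x. g x * (\<integral>\<^sup>+r. ennreal (2*r*exp(- (r\<^sup>2))) * indicator {0<..} r * indicator {x. sqnorm d x \<le> r\<^sup>2} x \<partial>lborel) \<partial>euclid d)"
    by (rule nn_integral_cmult) measurable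
  also have "(\<integral>\<^sup>+x. g x * (\<integral>\<^sup>+r. ennreal (2*r*exp(- (r\<^sup>2))) * indicator {0<..} r * indicator {x. sqnorm d x \<le> r\<^sup>2} x \<partial>lborel) \<partial>euclid d)
     = Kn d s * Tb d g"
    unfolding Kn_def Tb_def by (rule layer[OF h g]) measurable
  finally show ?thesis .
qed

lemma hom_mult_sqnorm:
  assumes h: "hom d s f"
  shows "hom d (s + 2*q) (\<lambda>x. f x * ennreal (sqnorm d x ^ q))"
  unfolding hom_def
proof (intro ballI allI impI)
  fix x c assume x: "x \<in> space (euclid d)" and c: "(c::real) > 0"
  have "f (sc d c x) * ennreal (sqnorm d (sc d c x) ^ q) = ennreal (c ^ s) * f x * ennreal ((c^2)^q * sqnorm d x ^ q)"
    using h x c unfolding hom_def by (simp add: sqnorm_sc power_mult_distrib)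
  also have "\<dots> = ennreal (c ^ s) * ennreal ((c^2)^q) * (f x * ennreal (sqnorm d x ^ q))"
    using c by (simp add: ennreal_mult sqnorm_nonneg mult_ac)
  also have "ennreal (c ^ s) * ennreal ((c^2)^q) = ennreal (c ^ (s + 2*q))"
    using c by (simp add: ennreal_mult[symmetric] power_add power_mult)
  finally show "f (sc d c x) * ennreal (sqnorm d (sc d c x) ^ q) = ennreal (c ^ (s + 2*q)) * (f x * ennreal (sqnorm d x ^ q))" .
qed

lemma ball_moment:
  assumes h: "hom d 0 f" and f[measurable]: "f \<in> borel_measurable (euclid d)" and q: "q \<ge> 1"
  shows "Tb d (\<lambda>x. f x * ennreal (sqnorm d x ^ q)) + ennreal (real (2*q) / (real (2*q) + real (Suc d))) * Tb d f = Tb d f"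
proof -
  let ?nu = "\<lambda>r::real. ennreal (real (2*q) * r^(2*q-1)) * indicator {..1} r"
  have "Tb d f = (\<integral>\<^sup>+x. f x * ennreal (sqnorm d x ^ q) * indicator {x. sqnorm d x \<le> 1} x
        + f x * (ennreal (1 - sqnorm d x ^ q) * indicator {x. x \<le> 1} (sqnorm d x)) \<partial>euclid d)"
    unfolding Tb_def
  proof (intro nn_integral_cong)
    fix x
    show "f x * indicator {x. sqnorm d x \<le> 1} x = f x * ennreal (sqnorm d x ^ q) * indicator {x. sqnorm d x \<le> 1} x
        + f x * (ennreal (1 - sqnorm d x ^ q) * indicator {x. x \<le> 1} (sqnorm d x))"
    proof (cases "sqnorm d x \<le> 1")
      case True
      have "sqnorm d x ^ q \<le> 1" using True sqnorm_nonneg[of d x] by (simp add: power_le_one)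
      then have "ennreal (sqnorm d x ^ q) + ennreal (1 - sqnorm d x ^ q) = 1"
        using sqnorm_nonneg[of d x] by (subst ennreal_plus[symmetric]) auto
      then show ?thesis using True by (simp add: distrib_left[symmetric] mult.assoc)
    qed simp
  qed
  also have "\<dots> = Tb d (\<lambda>x. f x * ennreal (sqnorm d x ^ q)) +
      (\<integral>\<^sup>+x. f x * (ennreal (1 - sqnorm d x ^ q) * indicator {x. x \<le> 1} (sqnorm d x)) \<partial>euclid d)"
    unfolding Tb_def by (intro nn_integral_add) measurable
  also have "(\<integral>\<^sup>+x. f x * (ennreal (1 - sqnorm d x ^ q) * indicator {x. x \<le> 1} (sqnorm d x)) \<partial>euclid d)
      = (\<integral>\<^sup>+x. f x * (\<integral>\<^sup>+r. ?nu r * indicator {0<..} r * indicator {x. sqnorm d x \<le> r\<^sup>2} x \<partial>lborel) \<partial>euclid d)"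
  proof (intro nn_integral_cong)
    fix x
    have "(\<integral>\<^sup>+r. ?nu r * indicator {0<..} r * indicator {x. sqnorm d x \<le> r\<^sup>2} x \<partial>lborel)
        = ennreal (1 - sqnorm d x ^ q) * indicator {x. x \<le> 1} (sqnorm d x)"
      using ball_profile[OF sqnorm_nonneg[of d x], of "2*q" q] by (simp add: indicator_def of_bool_def)
    then show "f x * (ennreal (1 - sqnorm d x ^ q) * indicator {x. x \<le> 1} (sqnorm d x))
       = f x * (\<integral>\<^sup>+r. ?nu r * indicator {0<..} r * indicator {x. sqnorm d x \<le> r\<^sup>2} x \<partial>lborel)"
      by simp
  qed
  also have "\<dots> = (\<integral>\<^sup>+r. ?nu r * indicator {0<..} r * ennreal (r ^ (Suc d + 0)) \<partial>lborel) * Tb d f"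
    unfolding Tb_def by (rule layer[OF h f]) measurable
  also have "(\<integral>\<^sup>+r. ?nu r * indicator {0<..} r * ennreal (r ^ (Suc d + 0)) \<partial>lborel)
      = ennreal (real (2*q) / (real (2*q) + real (Suc d)))"
    using ball_radial_integral[of "2*q" d] q by simp
  finally show ?thesis by simp
qed

definition Jv :: "nat \<Rightarrow> real" where
  "Jv a = (if even a then sqrt pi / 2 * (fact a / (2 ^ a * fact (a div 2))) else fact (a div 2) / 2)"

lemma Jv_int: "has_bochner_integral lborel (\<lambda>x::real. indicator {0..} x *\<^sub>R (exp (- (x\<^sup>2)) * x ^ a)) (Jv a)"
proof (cases "even a")
  case True
  then obtain k where k: "a = 2 * k" by blast
  show ?thesis using gaussian_moment_even_pos[of k] k by (simp add: Jv_def)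
next
  case False
  then obtain k where k: "a = 2 * k + 1" using oddE by blast
  then have "a div 2 = k" by simp
  then show ?thesis using gaussian_moment_odd_pos[of k] k False by (simp add: Jv_def)
qed

lemma Jv_pos: "Jv a > 0"
  by (simp add: Jv_def)

lemma Jv_rec_even_aux:
  fixes F G P k :: real
  assumes "G > 0" "P > 0" "k \<ge> 0"
  shows "sqrt pi / 2 * (((2*k+2) * (2*k+1) * F) / ((4 * P) * ((k+1) * G))) = (2*k+1) / 2 * (sqrt pi / 2 * (F / (P * G)))"
proof -
  have "((2*k+2) * (2*k+1) * F) / ((4 * P) * ((k+1) * G)) = ((2*k+1) * F) / (2 * (P * G))"
  proof -
    have e1: "(2*k+2) * (2*k+1) * F = ((2*k+1) * F) * (2*(k+1))" by (simp add: algebra_simps)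
    have e2: "(4 * P) * ((k+1) * G) = (2 * (P * G)) * (2*(k+1))" by (simp add: algebra_simps)
    have "2*(k+1) \<noteq> 0" using assms by simp
    then show ?thesis unfolding e1 e2 by simp
  qed
  then show ?thesis by simp
qed

lemma Jv_rec: "Jv (a + 2) = (real a + 1) / 2 * Jv a"
proof (cases "even a")
  case True
  then obtain k where k: "a = 2 * k" by blast
  have f1: "fact (2*k+2) = (2*real k+2) * (2*real k+1) * (fact (2*k) :: real)"
    by (simp add: fact_Suc algebra_simps)
  have f2: "fact (k+1) = (real k + 1) * (fact k :: real)" by (simp add: fact_Suc algebra_simps)
  have p: "(2::real) ^ (2*k+2) = 4 * 2 ^ (2*k)" by (simp add: power_add)
  have "Jv (a + 2) = sqrt pi / 2 * (fact (2*k+2) / (2 ^ (2*k+2) * fact (k+1)))"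
    using k by (simp add: Jv_def)
  also have "\<dots> = sqrt pi / 2 * (((2*real k+2) * (2*real k+1) * fact (2*k)) / ((4 * 2 ^ (2*k)) * ((real k + 1) * fact k)))"
    by (simp only: f1 f2 p)
  also have "\<dots> = (2*real k+1) / 2 * (sqrt pi / 2 * (fact (2*k) / (2 ^ (2*k) * fact k)))"
    by (rule Jv_rec_even_aux) auto
  also have "\<dots> = (real a + 1) / 2 * Jv a"
    using k by (simp add: Jv_def)
  finally show ?thesis .
next
  case False
  then obtain k where k: "a = 2 * k + 1" using oddE by blast
  then have "(a + 2) div 2 = k + 1" "a div 2 = k" by simp_all
  moreover have "fact (k+1) = (real k + 1) * (fact k :: real)" by (simp add: fact_Suc algebra_simps)
  ultimately show ?thesis using k False
    by (simp add: Jv_def field_simps)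
qed

lemma Kn_val: "Kn d s = ennreal (2 * Jv (Suc d + s + 1))"
proof -
  have "Kn d s = (\<integral>\<^sup>+r. ennreal (2 * (indicator {0..} r *\<^sub>R (exp (- (r\<^sup>2)) * r ^ (Suc d + s + 1)))) \<partial>lborel)"
    unfolding Kn_def
  proof (intro nn_integral_cong_AE)
    show "AE r in lborel. ennreal (2*r*exp(- (r\<^sup>2))) * indicator {0<..} r * ennreal (r ^ (Suc d + s))
       = ennreal (2 * (indicator {0..} r *\<^sub>R (exp (- (r\<^sup>2)) * r ^ (Suc d + s + 1))))"
      using AE_lborel_singleton[of "0::real"]
    proof eventually_elim
      case (elim r)
      show ?case
      proof (cases "r > 0")
        case True
        then show ?thesis by (simp add: ennreal_mult[symmetric] indicator_def mult_ac)
      next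
        case False
        then show ?thesis using elim by (simp add: indicator_def)
      qed
    qed
  qed
  also have "\<dots> = ennreal (2 * Jv (Suc d + s + 1))"
  proof -
    have hb: "has_bochner_integral lborel (\<lambda>r::real. 2 * (indicator {0..} r *\<^sub>R (exp (- (r\<^sup>2)) * r ^ (Suc d + s + 1)))) (2 * Jv (Suc d + s + 1))"
      by (intro has_bochner_integral_mult_right Jv_int)
    show ?thesis
      using hb Jv_pos[of "Suc d + s + 1"]
      by (subst nn_integral_eq_integrable) (auto simp: has_bochner_integral_iff indicator_def)
  qed
  finally show ?thesis .
qed

lemma Jv_iter: "Jv (n + 1 + 2*q) = Jv (n + 1) * (\<Prod>j<q. (real n + 2*real j + 2) / 2)"
proof (induction q)
  case (Suc q)
  have "Jv (n + 1 + 2 * Suc q) = Jv ((n + 1 + 2*q) + 2)" by (simp add: algebra_simps)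
  also have "\<dots> = (real (n + 1 + 2*q) + 1) / 2 * Jv (n + 1 + 2*q)" by (rule Jv_rec)
  finally show ?case using Suc by (simp add: algebra_simps)
qed simp

lemma prod_shift_identity:
  "real n * (\<Prod>j<q. (real n + 2*real j + 2)) = (real n + 2 * real q) * (\<Prod>j<q. (real n + 2*real j))"
proof (induction q)
  case (Suc q)
  have "real n * (\<Prod>j<Suc q. (real n + 2*real j + 2)) = (real n * (\<Prod>j<q. (real n + 2*real j + 2))) * (real n + 2 * real q + 2)"
    by (simp add: mult_ac)
  also have "\<dots> = (real n + 2 * real q) * (\<Prod>j<q. (real n + 2*real j)) * (real n + 2 * real q + 2)"
    using Suc by simp
  also have "\<dots> = (real n + 2 * real (Suc q)) * (\<Prod>j<Suc q. (real n + 2*real j))"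
    by (simp add: algebra_simps)
  finally show ?case .
qed simp

definition Rq :: "nat \<Rightarrow> nat \<Rightarrow> real" where
  "Rq d q = (\<Prod>j<q. (real (Suc d) + 2*real j) / 2)"

lemma Rq_pos: "Rq d q > 0"
  unfolding Rq_def by (intro prod_pos) auto

lemma Rq_eq_aux:
  fixes J A B N Q P :: real
  assumes "N * A = (N + Q) * B"
  shows "2 * (J * (A / P)) * N = (B / P) * (2 * J) * (Q + N)"
proof -
  have "2 * (J * (A / P)) * N = 2 * J * (N * A) / P" by simp
  also have "\<dots> = 2 * J * ((N + Q) * B) / P" using assms by simp
  also have "\<dots> = (B / P) * (2 * J) * (Q + N)" by (simp add: algebra_simps)
  finally show ?thesis .
qed

lemma Rq_eq: "2 * Jv (Suc d + 2*q + 1) * real (Suc d) = Rq d q * (2 * Jv (Suc d + 0 + 1)) * (real (2*q) + real (Suc d))"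
proof -
  define A where "A = (\<Prod>j<q. (real (Suc d) + 2*real j + 2))"
  define B where "B = (\<Prod>j<q. (real (Suc d) + 2*real j))"
  have "Jv (Suc d + 2*q + 1) = Jv (Suc d + 1) * (\<Prod>j<q. (real (Suc d) + 2*real j + 2) / 2)"
    using Jv_iter[of "Suc d" q] by (simp add: algebra_simps)
  also have "(\<Prod>j<q. (real (Suc d) + 2*real j + 2) / 2) = A / 2^q"
    unfolding A_def by (simp add: prod_dividef)
  finally have 1: "Jv (Suc d + 2*q + 1) = Jv (Suc d + 0 + 1) * (A / 2^q)" by simp
  have 2: "Rq d q = B / 2^q"
    unfolding Rq_def B_def by (simp add: prod_dividef)
  have 3: "real (Suc d) * A = (real (Suc d) + real (2*q)) * B"
    unfolding A_def B_def using prod_shift_identity[of "Suc d" q] by simp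
  show ?thesis unfolding 1 2 by (rule Rq_eq_aux[OF 3])
qed

lemma NG_moment:
  assumes h: "hom d 0 f" and f[measurable]: "f \<in> borel_measurable (euclid d)"
    and fin: "(\<integral>\<^sup>+x. f x \<partial>NG d) \<noteq> \<infinity>"
  shows "(\<integral>\<^sup>+x. f x * ennreal (sqnorm d x ^ q) \<partial>NG d) = ennreal (Rq d q) * (\<integral>\<^sup>+x. f x \<partial>NG d)"
proof (cases "q = 0")
  case True
  then show ?thesis by (simp add: Rq_def)
next
  case False
  then have q: "q \<ge> 1" by simp
  define cn where "cn = (1 / sqrt pi) ^ Suc d"
  have cn: "cn > 0" unfolding cn_def by simp
  define J0 where "J0 = 2 * Jv (Suc d + 0 + 1)"
  define Jq where "Jq = 2 * Jv (Suc d + 2*q + 1)"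
  have J0: "J0 > 0" unfolding J0_def using Jv_pos by simp
  have Jq: "Jq > 0" unfolding Jq_def using Jv_pos by simp
  have A: "(\<integral>\<^sup>+x. f x \<partial>NG d) = ennreal cn * (ennreal J0 * Tb d f)"
    using NG_layer[OF h f] by (simp add: Kn_val cn_def J0_def)
  have "Tb d f \<noteq> \<infinity>"
  proof
    assume "Tb d f = \<infinity>"
    then have "(\<integral>\<^sup>+x. f x \<partial>NG d) = \<infinity>" using A cn J0 by (simp add: ennreal_mult_eq_top_iff)
    then show False using fin by simp
  qed
  then obtain t where t: "Tb d f = ennreal t" "t \<ge> 0" by (cases "Tb d f") auto
  define a where "a = real (2*q) / (real (2*q) + real (Suc d))"
  have a: "a \<ge> 0" "a \<le> 1" unfolding a_def by auto
  have bm: "Tb d (\<lambda>x. f x * ennreal (sqnorm d x ^ q)) + ennreal a * ennreal t = ennreal t"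
    using ball_moment[OF h f q] t unfolding a_def by simp
  have "Tb d (\<lambda>x. f x * ennreal (sqnorm d x ^ q)) \<noteq> \<infinity>"
  proof
    assume "Tb d (\<lambda>x. f x * ennreal (sqnorm d x ^ q)) = \<infinity>"
    then show False using bm by simp
  qed
  then obtain x where x: "Tb d (\<lambda>x. f x * ennreal (sqnorm d x ^ q)) = ennreal x" "x \<ge> 0"
    by (cases "Tb d (\<lambda>x. f x * ennreal (sqnorm d x ^ q))") auto
  have "ennreal (x + a * t) = ennreal t"
    using bm x t a by (simp add: ennreal_plus ennreal_mult)
  then have xt: "x + a * t = t" using x t a by (subst (asm) ennreal_inj) auto
  have h2: "hom d (0 + 2*q) (\<lambda>x. f x * ennreal (sqnorm d x ^ q))" by (rule hom_mult_sqnorm[OF h])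
  have "(\<integral>\<^sup>+x. f x * ennreal (sqnorm d x ^ q) \<partial>NG d) = ennreal cn * (ennreal Jq * ennreal x)"
    using NG_layer[OF h2] x by (simp add: Kn_val cn_def Jq_def)
  also have "\<dots> = ennreal (cn * (Jq * x))" using cn Jq x by (simp add: ennreal_mult)
  also have "cn * (Jq * x) = Rq d q * (cn * (J0 * t))"
  proof -
    have eq: "Jq * real (Suc d) = Rq d q * J0 * (real (2*q) + real (Suc d))"
      unfolding Jq_def J0_def by (rule Rq_eq)
    have "x = t * (1 - a)" using xt by (simp add: algebra_simps)
    also have "1 - a = real (Suc d) / (real (2*q) + real (Suc d))"
      unfolding a_def by (simp add: field_simps)
    finally have "Jq * x = t * (Jq * real (Suc d)) / (real (2*q) + real (Suc d))" by simp
    also have "\<dots> = t * (Rq d q * J0)" unfolding eq by simp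
    finally show ?thesis by simp
  qed
  also have "ennreal (Rq d q * (cn * (J0 * t))) = ennreal (Rq d q) * (\<integral>\<^sup>+x. f x \<partial>NG d)"
    using A t cn J0 Rq_pos[of d q] by (simp add: ennreal_mult)
  finally show ?thesis .
qed

definition proj :: "nat \<Rightarrow> (nat \<Rightarrow> real) \<Rightarrow> (nat \<Rightarrow> real)" where
  "proj d x = (\<lambda>i\<in>{..d}. x i / sqrt (sqnorm d x))"

definition Bs :: "nat \<Rightarrow> (nat \<Rightarrow> real) set" where
  "Bs d = {x \<in> space (euclid d). sqnorm d x \<le> 1}"

lemma sphere_unif_alt: "sphere_unif d = distr (uniform_measure (euclid d) (Bs d)) (euclid d) (proj d)"
  unfolding sphere_unif_def Bs_def proj_def ..

lemma measurable_proj[measurable]: "proj d \<in> euclid d \<rightarrow>\<^sub>M euclid d"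
proof -
  have "(\<lambda>x. \<lambda>i\<in>{..d}. x i / sqrt (sqnorm d x)) \<in> euclid d \<rightarrow>\<^sub>M Pi\<^sub>M {..d} (\<lambda>_. lborel)"
  proof (rule measurable_restrict)
    fix i assume i: "i \<in> {..d}"
    have [measurable]: "(\<lambda>x. x i) \<in> borel_measurable (euclid d)"
      unfolding euclid_def using i by measurable
    have "(\<lambda>x. x i / sqrt (sqnorm d x)) \<in> borel_measurable (euclid d)" by measurable
    then show "(\<lambda>x. x i / sqrt (sqnorm d x)) \<in> euclid d \<rightarrow>\<^sub>M lborel" by simp
  qed
  then show ?thesis unfolding proj_def by (metis euclid_def)
qed

lemma Bs_sets[measurable]: "Bs d \<in> sets (euclid d)"
  unfolding Bs_def by measurable

lemma proj_sc: "c > 0 \<Longrightarrow> proj d (sc d c x) = proj d x"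
proof -
  assume c: "c > 0"
  have "sqrt (sqnorm d (sc d c x)) = c * sqrt (sqnorm d x)"
    using c by (simp add: sqnorm_sc real_sqrt_mult)
  then show ?thesis
    unfolding proj_def using c by (intro ext) (simp add: sc_def)
qed

lemma hom0_comp_proj:
  "hom d 0 (\<lambda>x. G (proj d x))"
  unfolding hom_def by (simp add: proj_sc)

lemma sqnorm_proj: "sqnorm d (proj d x) = (if sqnorm d x = 0 then 0 else 1)"
proof -
  have "sqnorm d (proj d x) = (\<Sum>i\<le>d. (x i)\<^sup>2 / sqnorm d x)"
    unfolding sqnorm_def proj_def
    by (intro sum.cong refl) (simp add: power_divide sqnorm_nonneg[unfolded sqnorm_def])
  also have "\<dots> = sqnorm d x / sqnorm d x" unfolding sqnorm_def by (rule sum_divide_distrib[symmetric])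
  finally show ?thesis by simp
qed

lemma Tb_Bs: "(\<integral>\<^sup>+x. F x * indicator (Bs d) x \<partial>euclid d) = Tb d F"
  unfolding Tb_def Bs_def by (intro nn_integral_cong) (simp add: indicator_def)

lemma hom0_const: "hom d 0 (\<lambda>_. c)"
  unfolding hom_def by simp

lemma NG_prob: "(\<integral>\<^sup>+x. 1 \<partial>NG d) = 1"
  using prob_space.emeasure_space_1[OF prob_space_NG] by simp

lemma Tb_one:
  "Tb d (\<lambda>_. 1) = ennreal (1 / ((1 / sqrt pi) ^ Suc d * (2 * Jv (Suc d + 0 + 1))))"
proof -
  define c where "c = (1 / sqrt pi) ^ Suc d * (2 * Jv (Suc d + 0 + 1))"
  have c: "c > 0" unfolding c_def using Jv_pos by simp
  have "(\<integral>\<^sup>+x. 1 \<partial>NG d) = ennreal ((1 / sqrt pi) ^ Suc d) * (Kn d 0 * Tb d (\<lambda>_. 1))"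
    by (rule NG_layer[OF hom0_const]) simp
  then have "1 = ennreal ((1 / sqrt pi) ^ Suc d) * (ennreal (2 * Jv (Suc d + 0 + 1)) * Tb d (\<lambda>_. 1))"
    by (simp only: NG_prob Kn_val)
  also have "\<dots> = ennreal c * Tb d (\<lambda>_. 1)"
  proof -
    define a where "a = (1 / sqrt pi) ^ Suc d"
    define b where "b = 2 * Jv (Suc d + 0 + 1)"
    have "a \<ge> 0" "b \<ge> 0" unfolding a_def b_def using Jv_pos[of "Suc d + 0 + 1"] by auto
    then have "ennreal (a * b) = ennreal a * ennreal b" by (rule ennreal_mult)
    then show ?thesis unfolding c_def a_def[symmetric] b_def[symmetric] by (simp add: mult.assoc)
  qed
  finally have 1: "ennreal c * Tb d (\<lambda>_. 1) = 1" by simp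
  have "Tb d (\<lambda>_. 1) = ennreal (1/c) * (ennreal c * Tb d (\<lambda>_. 1))"
    using c by (simp add: ennreal_mult[symmetric] mult.assoc[symmetric])
  also have "\<dots> = ennreal (1/c)" using 1 by simp
  finally show ?thesis unfolding c_def .
qed

lemma NG_component: "i \<le> d \<Longrightarrow> distr (NG d) ND (\<lambda>y. y i) = ND"
  unfolding NG_def by (rule distr_PiM_component) (auto simp: prob_space_ND)

lemma NG_indep: "prob_space.indep_vars (NG d) (\<lambda>_. borel) (\<lambda>i y. y i) {..d}"
proof -
  interpret P: prob_space "NG d" by (rule prob_space_NG)
  have meas: "\<And>i. i \<in> {..d} \<Longrightarrow> (\<lambda>y. y i) \<in> NG d \<rightarrow>\<^sub>M borel"
    unfolding NG_def ND_def by measurable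
  have "distr (NG d) (Pi\<^sub>M {..d} (\<lambda>_. borel)) (\<lambda>x. \<lambda>i\<in>{..d}. x i) = NG d"
  proof -
    have "distr (NG d) (Pi\<^sub>M {..d} (\<lambda>_. borel)) (\<lambda>x. \<lambda>i\<in>{..d}. x i) = distr (NG d) (NG d) (\<lambda>x. x)"
    proof (rule distr_cong)
      show "sets (Pi\<^sub>M {..d} (\<lambda>_. borel)) = sets (NG d)"
        unfolding NG_def ND_def by (intro sets_PiM_cong) auto
      show "x \<in> space (NG d) \<Longrightarrow> (\<lambda>i\<in>{..d}. x i) = x" for x
        by (auto simp: space_NG space_euclid PiE_def extensional_def)
    qed simp
    also have "\<dots> = NG d" by (rule distr_id2) simp
    finally show ?thesis .
  qed
  also have "\<dots> = Pi\<^sub>M {..d} (\<lambda>i. distr (NG d) borel (\<lambda>y. y i))"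
  proof -
    have eq: "distr (NG d) borel (\<lambda>y. y i) = ND" if "i \<in> {..d}" for i
    proof -
      have "distr (NG d) borel (\<lambda>y. y i) = distr (NG d) ND (\<lambda>y. y i)"
        by (intro distr_cong) (auto simp: ND_def)
      then show ?thesis using NG_component[of i d] that by simp
    qed
    have "Pi\<^sub>M {..d} (\<lambda>i. distr (NG d) borel (\<lambda>y. y i)) = Pi\<^sub>M {..d} (\<lambda>_. ND)"
      by (rule PiM_cong) (simp_all add: eq)
    then show ?thesis by (simp add: NG_def)
  qed
  finally show ?thesis
    using P.indep_vars_iff_distr_eq_PiM'[of "{..d}" "\<lambda>i y. y i" "\<lambda>_. borel"] meas by simp
qed

lemma NG_coord_distributed:
  assumes i: "i \<le> d"
  shows "distributed (NG d) lborel (\<lambda>y. y i) (normal_density 0 gsd)"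
  unfolding distributed_def
proof (intro conjI)
  have "distr (NG d) lborel (\<lambda>y. y i) = distr (NG d) ND (\<lambda>y. y i)"
    by (intro distr_cong) (auto simp: ND_def)
  also have "\<dots> = ND" using NG_component[OF i] .
  finally show "distr (NG d) lborel (\<lambda>y. y i) = density lborel (\<lambda>x. ennreal (normal_density 0 gsd x))"
    by (simp add: ND_def)
  have m: "(\<lambda>y. y i) \<in> Pi\<^sub>M {..d} (\<lambda>_. ND) \<rightarrow>\<^sub>M ND"
    using i by (intro measurable_component_singleton) simp
  show "(\<lambda>y. y i) \<in> NG d \<rightarrow>\<^sub>M lborel"
    using m unfolding NG_def by (subst measurable_cong_sets[where M'="Pi\<^sub>M {..d} (\<lambda>_. ND)" and N'=ND]) (auto simp: ND_def)
qed measurable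

lemma gauss_lin_moment:
  "(\<integral>\<^sup>+y. ennreal ((\<Sum>i\<le>d. x i * y i) ^ (2*q)) \<partial>NG d) = ennreal (fact (2*q) / (2^q * fact q) * (sqnorm d x / 2) ^ q)"
proof -
  interpret P: prob_space "NG d" by (rule prob_space_NG)
  define J where "J = {i\<in>{..d}. x i \<noteq> 0}"
  have sumJ: "(\<Sum>i\<le>d. x i * y i) = (\<Sum>i\<in>J. x i * y i)" for y
    unfolding J_def by (intro sum.mono_neutral_right) auto
  have sqJ: "sqnorm d x = (\<Sum>i\<in>J. (x i)\<^sup>2)"
    unfolding J_def sqnorm_def by (intro sum.mono_neutral_right) auto
  have nn: "0 \<le> (\<Sum>i\<in>J. (x i)\<^sup>2 / 2)" by (intro sum_nonneg) auto
  show ?thesis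
  proof (cases "J = {}")
    case True
    then have "sqnorm d x = 0" using sqJ by simp
    moreover have "(\<integral>\<^sup>+y. ennreal ((\<Sum>i\<le>d. x i * y i) ^ (2*q)) \<partial>NG d) = ennreal (0 ^ (2*q))"
      using True sumJ P.emeasure_space_1 by simp
    ultimately show ?thesis by (cases "q = 0") (auto simp: power_0_left)
  next
    case False
    define sg where "sg = sqrt (\<Sum>i\<in>J. (\<bar>x i\<bar> * gsd)\<^sup>2)"
    have ind: "P.indep_vars (\<lambda>_. borel) (\<lambda>i y. x i * y i) J"
    proof -
      have "P.indep_vars (\<lambda>_. borel) (\<lambda>i y. y i) J"
        using NG_indep by (rule P.indep_vars_subset) (auto simp: J_def)
      then show ?thesis by (rule P.indep_vars_compose2[where Y="\<lambda>i z. x i * z"]) simp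
    qed
    have dist: "distributed (NG d) lborel (\<lambda>y. x i * y i) (normal_density 0 (\<bar>x i\<bar> * gsd))" if "i \<in> J" for i
    proof -
      have "distributed (NG d) lborel (\<lambda>y. 0 + x i * y i) (normal_density (0 + x i * 0) (\<bar>x i\<bar> * gsd))"
        using that by (intro P.normal_density_affine NG_coord_distributed gsd_pos) (auto simp: J_def)
      then show ?thesis by simp
    qed
    have "distributed (NG d) lborel (\<lambda>y. \<Sum>i\<in>J. x i * y i) (normal_density (\<Sum>i\<in>J. 0) sg)"
      unfolding sg_def
      by (rule P.sum_indep_normal[OF _ False ind _ dist]) (auto simp: J_def gsd_pos)
    then have D: "distributed (NG d) lborel (\<lambda>y. \<Sum>i\<le>d. x i * y i) (normal_density 0 sg)"
      by (simp add: sumJ)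
    have sg2: "sg\<^sup>2 = sqnorm d x / 2"
      unfolding sg_def sqJ by (simp add: power_mult_distrib gsd_sq sum_divide_distrib nn)
    have sqpos: "sqnorm d x > 0"
    proof -
      obtain i where "i \<in> J" using False by blast
      then have "(x i)\<^sup>2 > 0" by (simp add: J_def)
      moreover have "(x i)\<^sup>2 \<le> (\<Sum>i\<in>J. (x i)\<^sup>2)"
        using \<open>i \<in> J\<close> by (intro member_le_sum) (auto simp: J_def)
      ultimately show ?thesis using sqJ by linarith
    qed
    have sgpos: "sg > 0"
    proof -
      have "sg \<ge> 0" unfolding sg_def by (simp add: sum_nonneg)
      moreover have "sg \<noteq> 0" using sg2 sqpos by auto
      ultimately show ?thesis by simp
    qed
    have "(\<integral>\<^sup>+y. ennreal ((\<Sum>i\<le>d. x i * y i) ^ (2*q)) \<partial>NG d)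
        = (\<integral>\<^sup>+z. ennreal (normal_density 0 sg z) * ennreal (z ^ (2*q)) \<partial>lborel)"
      by (rule distributed_nn_integral[OF D, symmetric]) measurable
    also have "\<dots> = (\<integral>\<^sup>+z. ennreal (normal_density 0 sg z * (z - 0) ^ (2*q)) \<partial>lborel)"
      by (intro nn_integral_cong) (simp add: ennreal_mult[symmetric] zero_le_even_power)
    also have "\<dots> = ennreal (fact (2 * q) / ((2 / sg\<^sup>2)^q * fact q))"
    proof -
      have hb: "has_bochner_integral lborel (\<lambda>z. normal_density 0 sg z * (z - 0) ^ (2*q)) (fact (2 * q) / ((2 / sg\<^sup>2)^q * fact q))"
        by (rule normal_moment_even[OF sgpos])
      then have "integrable lborel (\<lambda>z. normal_density 0 sg z * (z - 0) ^ (2*q))"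
          "integral\<^sup>L lborel (\<lambda>z. normal_density 0 sg z * (z - 0) ^ (2*q)) = fact (2 * q) / ((2 / sg\<^sup>2)^q * fact q)"
        by (simp_all add: has_bochner_integral_iff)
      moreover have "0 \<le> fact (2 * q) / ((2 / sg\<^sup>2)^q * fact q)" by simp
      ultimately show ?thesis
        by (subst nn_integral_eq_integrable) (auto simp: zero_le_even_power simp del: diff_0_right)
    qed
    also have "fact (2 * q) / ((2 / sg\<^sup>2)^q * fact q) = fact (2*q) / (2^q * fact q) * (sqnorm d x / 2) ^ q"
    proof -
      show ?thesis unfolding sg2 using sqpos by (simp add: field_simps power_divide power_mult_distrib[symmetric])
    qed
    finally show ?thesis .
  qed
qed

lemma sets_sphere: "sets (sphere_unif d) = sets (euclid d)"
  unfolding sphere_unif_def by simp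

lemma emeasure_Bs: "emeasure (euclid d) (Bs d) = Tb d (\<lambda>_. 1)"
  unfolding Tb_Bs[symmetric] by (simp add: nn_integral_indicator)

lemma c_pos: "(1 / sqrt pi) ^ Suc d * (2 * Jv (Suc d + 0 + 1)) > 0"
  using Jv_pos by simp

lemma prob_space_S: "prob_space (sphere_unif d)"
proof -
  define c where "c = (1 / sqrt pi) ^ Suc d * (2 * Jv (Suc d + 0 + 1))"
  have c: "c > 0" unfolding c_def by (rule c_pos)
  have "emeasure (euclid d) (Bs d) \<noteq> 0" "emeasure (euclid d) (Bs d) \<noteq> \<infinity>"
    unfolding emeasure_Bs Tb_one c_def[symmetric] using c by simp_all
  then have "prob_space (uniform_measure (euclid d) (Bs d))" by (rule prob_space_uniform_measure)
  then show ?thesis unfolding sphere_unif_alt by (rule prob_space.prob_space_distr) simp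
qed

lemma S_NG:
  assumes G[measurable]: "G \<in> borel_measurable (euclid d)"
  shows "(\<integral>\<^sup>+x. G x \<partial>sphere_unif d) = (\<integral>\<^sup>+x. G (proj d x) \<partial>NG d)"
proof -
  define c where "c = (1 / sqrt pi) ^ Suc d * (2 * Jv (Suc d + 0 + 1))"
  have c: "c > 0" unfolding c_def by (rule c_pos)
  have "(\<integral>\<^sup>+x. G x \<partial>sphere_unif d) = (\<integral>\<^sup>+x. G (proj d x) \<partial>uniform_measure (euclid d) (Bs d))"
    unfolding sphere_unif_alt by (subst nn_integral_distr) auto
  also have "\<dots> = Tb d (\<lambda>x. G (proj d x)) / emeasure (euclid d) (Bs d)"
    by (subst nn_integral_uniform_measure) (auto simp: Tb_Bs)
  also have "\<dots> = Tb d (\<lambda>x. G (proj d x)) * ennreal c"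
    unfolding emeasure_Bs Tb_one c_def[symmetric] using c
    by (simp add: divide_ennreal_def ennreal_inverse_positive inverse_ennreal)
  also have "\<dots> = (\<integral>\<^sup>+x. G (proj d x) \<partial>NG d)"
  proof -
    have "(\<integral>\<^sup>+x. G (proj d x) \<partial>NG d) = ennreal ((1 / sqrt pi) ^ Suc d) * (Kn d 0 * Tb d (\<lambda>x. G (proj d x)))"
      by (rule NG_layer[OF hom0_comp_proj]) simp
    also have "\<dots> = ennreal c * Tb d (\<lambda>x. G (proj d x))"
    proof -
      define a where "a = (1 / sqrt pi) ^ Suc d"
      define b where "b = 2 * Jv (Suc d + 0 + 1)"
      have "a \<ge> 0" "b \<ge> 0" unfolding a_def b_def using Jv_pos[of "Suc d + 0 + 1"] by auto
      then have "ennreal (a * b) = ennreal a * ennreal b" by (rule ennreal_mult)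
      then show ?thesis unfolding c_def a_def[symmetric] b_def[symmetric] Kn_val by (simp add: mult.assoc)
    qed
    finally show ?thesis by (simp add: mult.commute)
  qed
  finally show ?thesis .
qed

definition tt :: "nat \<Rightarrow> (nat \<Rightarrow> real) \<Rightarrow> (nat \<Rightarrow> real) \<Rightarrow> real" where
  "tt d x y = (\<Sum>i\<le>d. x i * y i)"

lemma comp_meas: "i \<le> d \<Longrightarrow> (\<lambda>x. x i) \<in> borel_measurable (euclid d)"
  unfolding euclid_def by measurable

lemma tt_meas: "(\<lambda>p. tt d (fst p) (snd p)) \<in> borel_measurable (euclid d \<Otimes>\<^sub>M euclid d)"
  unfolding tt_def
proof (intro borel_measurable_sum)
  fix i assume "i \<in> {..d}"
  then have [measurable]: "(\<lambda>x. x i) \<in> borel_measurable (euclid d)" by (simp add: comp_meas)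
  show "(\<lambda>p. fst p i * snd p i) \<in> borel_measurable (euclid d \<Otimes>\<^sub>M euclid d)" by measurable
qed

lemma tt_meas2: "(\<lambda>y. tt d x y) \<in> borel_measurable (euclid d)"
  unfolding tt_def
proof (intro borel_measurable_sum)
  fix i assume "i \<in> {..d}"
  then have [measurable]: "(\<lambda>x. x i) \<in> borel_measurable (euclid d)" by (simp add: comp_meas)
  show "(\<lambda>y. x i * y i) \<in> borel_measurable (euclid d)" by measurable
qed

lemma tt_proj: "tt d x (proj d y) = tt d x y / sqrt (sqnorm d y)"
  unfolding tt_def proj_def by (simp add: sum_divide_distrib)

lemma sqnorm_zero: "sqnorm d y = 0 \<Longrightarrow> tt d x y = 0"
proof -
  assume "sqnorm d y = 0"
  then have "\<forall>i\<in>{..d}. (y i)\<^sup>2 = 0" unfolding sqnorm_def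
    by (subst (asm) sum_nonneg_eq_0_iff) auto
  then show ?thesis unfolding tt_def by simp
qed

lemma tt_proj_pow: "ennreal (tt d x (proj d y) ^ (2*q)) * ennreal (sqnorm d y ^ q) = ennreal (tt d x y ^ (2*q))"
proof (cases "sqnorm d y = 0")
  case True
  then show ?thesis using sqnorm_zero[OF True, of x] by (cases "q = 0") (auto simp: tt_proj power_0_left)
next
  case False
  then have s: "sqnorm d y > 0" using sqnorm_nonneg[of d y] by simp
  have "tt d x (proj d y) ^ (2*q) * sqnorm d y ^ q = tt d x y ^ (2*q)"
    unfolding tt_proj using s by (simp add: power_divide power_mult)
  then show ?thesis by (simp add: ennreal_mult[symmetric] zero_le_even_power sqnorm_nonneg)
qed

lemma tt_proj_bound: "(tt d x (proj d y))\<^sup>2 \<le> sqnorm d x"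
proof -
  have "(tt d x (proj d y))\<^sup>2 \<le> sqnorm d x * sqnorm d (proj d y)"
    unfolding tt_def sqnorm_def
    using Cauchy_Schwarz_ineq_sum[of x "proj d y" "{..d}"] by simp
  also have "\<dots> \<le> sqnorm d x * 1"
    using sqnorm_nonneg[of d x] by (intro mult_left_mono) (auto simp: sqnorm_proj)
  finally show ?thesis by simp
qed

lemma inner_moment:
  "(\<integral>\<^sup>+y. ennreal (tt d x y ^ (2*q)) \<partial>sphere_unif d) =
     ennreal (fact (2*q) / (2^q * fact q) * (sqnorm d x / 2) ^ q / Rq d q)"
proof -
  interpret P: prob_space "NG d" by (rule prob_space_NG)
  have m1[measurable]: "(\<lambda>y. tt d x y) \<in> borel_measurable (euclid d)" by (rule tt_meas2)
  define f where "f y = ennreal (tt d x (proj d y) ^ (2*q))" for y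
  have fm[measurable]: "f \<in> borel_measurable (euclid d)" unfolding f_def by measurable
  have hf: "hom d 0 f" unfolding f_def by (rule hom0_comp_proj)
  have fin: "(\<integral>\<^sup>+y. f y \<partial>NG d) \<noteq> \<infinity>"
  proof -
    have "(\<integral>\<^sup>+y. f y \<partial>NG d) \<le> (\<integral>\<^sup>+y. ennreal (sqnorm d x ^ q) \<partial>NG d)"
    proof (intro nn_integral_mono)
      fix y
      have "tt d x (proj d y) ^ (2*q) = ((tt d x (proj d y))\<^sup>2) ^ q" by (simp add: power_mult)
      also have "\<dots> \<le> sqnorm d x ^ q" by (intro power_mono tt_proj_bound) simp
      finally show "f y \<le> ennreal (sqnorm d x ^ q)" unfolding f_def by (rule ennreal_leI)
    qed
    also have "\<dots> = ennreal (sqnorm d x ^ q)" using P.emeasure_space_1 by simp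
    finally show ?thesis by (auto simp: top_unique)
  qed
  have "(\<integral>\<^sup>+y. ennreal (tt d x y ^ (2*q)) \<partial>sphere_unif d) = (\<integral>\<^sup>+y. f y \<partial>NG d)"
    unfolding f_def by (rule S_NG) measurable
  moreover have "ennreal (Rq d q) * (\<integral>\<^sup>+y. f y \<partial>NG d) = ennreal (fact (2*q) / (2^q * fact q) * (sqnorm d x / 2) ^ q)"
  proof -
    have "ennreal (Rq d q) * (\<integral>\<^sup>+y. f y \<partial>NG d) = (\<integral>\<^sup>+y. f y * ennreal (sqnorm d y ^ q) \<partial>NG d)"
      by (rule NG_moment[OF hf fm fin, symmetric])
    also have "\<dots> = (\<integral>\<^sup>+y. ennreal ((\<Sum>i\<le>d. x i * y i) ^ (2*q)) \<partial>NG d)"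
      unfolding f_def tt_proj_pow by (simp add: tt_def)
    also have "\<dots> = ennreal (fact (2*q) / (2^q * fact q) * (sqnorm d x / 2) ^ q)"
      by (rule gauss_lin_moment)
    finally show ?thesis .
  qed
  moreover
  have "(\<integral>\<^sup>+y. f y \<partial>NG d) = ennreal (1 / Rq d q) * (ennreal (Rq d q) * (\<integral>\<^sup>+y. f y \<partial>NG d))"
    using Rq_pos[of d q] by (simp add: ennreal_mult[symmetric] mult.assoc[symmetric])
  moreover have "ennreal (1 / Rq d q) * ennreal (fact (2*q) / (2^q * fact q) * (sqnorm d x / 2) ^ q)
     = ennreal (fact (2*q) / (2^q * fact q) * (sqnorm d x / 2) ^ q / Rq d q)"
    using Rq_pos[of d q] sqnorm_nonneg[of d x] by (simp add: ennreal_mult[symmetric])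
  ultimately show ?thesis by simp
qed

definition mom_val :: "nat \<Rightarrow> nat \<Rightarrow> real" where
  "mom_val d q = fact (2*q) / (2^q * fact q) / (Rq d q * 2^q)"

lemma S_sqnorm_moment: "(\<integral>\<^sup>+x. ennreal (sqnorm d x ^ q) \<partial>sphere_unif d) = 1"
proof -
  interpret P: prob_space "NG d" by (rule prob_space_NG)
  define f where "f y = ennreal (sqnorm d (proj d y) ^ q)" for y
  have fm[measurable]: "f \<in> borel_measurable (euclid d)" unfolding f_def by measurable
  have hf: "hom d 0 f" unfolding f_def by (rule hom0_comp_proj)
  have fin: "(\<integral>\<^sup>+y. f y \<partial>NG d) \<noteq> \<infinity>"
  proof -
    have "(\<integral>\<^sup>+y. f y \<partial>NG d) \<le> (\<integral>\<^sup>+y. 1 \<partial>NG d)"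
      by (intro nn_integral_mono) (auto simp: f_def sqnorm_proj power_0_left)
    then show ?thesis using P.emeasure_space_1 by (auto simp: top_unique)
  qed
  have "(\<integral>\<^sup>+x. ennreal (sqnorm d x ^ q) \<partial>sphere_unif d) = (\<integral>\<^sup>+y. f y \<partial>NG d)"
    unfolding f_def by (rule S_NG) measurable
  moreover have "ennreal (Rq d q) * (\<integral>\<^sup>+y. f y \<partial>NG d) = ennreal (Rq d q)"
  proof -
    have "ennreal (Rq d q) * (\<integral>\<^sup>+y. f y \<partial>NG d) = (\<integral>\<^sup>+y. f y * ennreal (sqnorm d y ^ q) \<partial>NG d)"
      by (rule NG_moment[OF hf fm fin, symmetric])
    also have "\<dots> = (\<integral>\<^sup>+y. 1 * ennreal (sqnorm d y ^ q) \<partial>NG d)"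
    proof (intro nn_integral_cong)
      fix y
      show "f y * ennreal (sqnorm d y ^ q) = 1 * ennreal (sqnorm d y ^ q)"
        unfolding f_def sqnorm_proj by (cases "q = 0") (auto simp: power_0_left)
    qed
    also have "\<dots> = ennreal (Rq d q) * (\<integral>\<^sup>+y. 1 \<partial>NG d)"
      by (rule NG_moment[OF hom0_const]) (auto simp: P.emeasure_space_1)
    finally show ?thesis using P.emeasure_space_1 by simp
  qed
  moreover have "(\<integral>\<^sup>+y. f y \<partial>NG d) = ennreal (1 / Rq d q) * (ennreal (Rq d q) * (\<integral>\<^sup>+y. f y \<partial>NG d))"
    using Rq_pos[of d q] by (simp add: ennreal_mult[symmetric] mult.assoc[symmetric])
  ultimately show ?thesis using Rq_pos[of d q] by (simp add: ennreal_mult[symmetric])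
qed

lemma tt_meas_S[measurable]: "(\<lambda>p. tt d (fst p) (snd p)) \<in> borel_measurable (sphere_unif d \<Otimes>\<^sub>M sphere_unif d)"
  using tt_meas[of d]
  by (subst measurable_cong_sets[OF sets_pair_measure_cong[OF sets_sphere sets_sphere] refl])

lemma pair_moment:
  "(\<integral>\<^sup>+p. ennreal (tt d (fst p) (snd p) ^ (2*q)) \<partial>(sphere_unif d \<Otimes>\<^sub>M sphere_unif d)) = ennreal (mom_val d q)"
proof -
  interpret S: prob_space "sphere_unif d" by (rule prob_space_S)
  have "(\<integral>\<^sup>+p. ennreal (tt d (fst p) (snd p) ^ (2*q)) \<partial>(sphere_unif d \<Otimes>\<^sub>M sphere_unif d))
      = (\<integral>\<^sup>+x. \<integral>\<^sup>+y. ennreal (tt d x y ^ (2*q)) \<partial>sphere_unif d \<partial>sphere_unif d)"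
    by (rule S.nn_integral_fst[symmetric, where f="\<lambda>p. ennreal (tt d (fst p) (snd p) ^ (2*q))", simplified]) measurable
  also have "\<dots> = (\<integral>\<^sup>+x. ennreal (mom_val d q) * ennreal (sqnorm d x ^ q) \<partial>sphere_unif d)"
  proof (intro nn_integral_cong)
    fix x
    have "fact (2*q) / (2^q * fact q) * (sqnorm d x / 2) ^ q / Rq d q = mom_val d q * sqnorm d x ^ q"
      unfolding mom_val_def by (simp add: power_divide)
    then show "(\<integral>\<^sup>+y. ennreal (tt d x y ^ (2*q)) \<partial>sphere_unif d) = ennreal (mom_val d q) * ennreal (sqnorm d x ^ q)"
      unfolding inner_moment using Rq_pos[of d q] sqnorm_nonneg[of d x]
      by (simp add: ennreal_mult[symmetric] mom_val_def)
  qed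
  also have "\<dots> = ennreal (mom_val d q) * (\<integral>\<^sup>+x. ennreal (sqnorm d x ^ q) \<partial>sphere_unif d)"
  proof (rule nn_integral_cmult)
    have "(\<lambda>x. ennreal (sqnorm d x ^ q)) \<in> borel_measurable (euclid d)" by measurable
    then show "(\<lambda>x. ennreal (sqnorm d x ^ q)) \<in> borel_measurable (sphere_unif d)"
      by (subst measurable_cong_sets[OF sets_sphere refl])
  qed
  also have "\<dots> = ennreal (mom_val d q)" by (simp add: S_sqnorm_moment)
  finally show ?thesis .
qed

definition Qp :: "nat \<Rightarrow> (nat \<Rightarrow> real) \<Rightarrow> real poly" where
  "Qp k a = (\<Sum>j\<le>k div 2. \<Sum>j'\<le>k div 2. monom (a j * a j' * 4 ^ (k - j - j')) (k - j - j'))"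

lemma sq_expand:
  fixes a :: "nat \<Rightarrow> real" and D t :: real
  assumes D: "D > 0"
  shows "(\<Sum>j\<le>k div 2. a j * (2*t) ^ (k - 2*j))\<^sup>2 = D ^ k * poly (Qp k (\<lambda>j. a j / D ^ (k - j))) (D * t\<^sup>2)"
proof -
  have "(\<Sum>j\<le>k div 2. a j * (2*t) ^ (k - 2*j))\<^sup>2
     = (\<Sum>j\<le>k div 2. \<Sum>j'\<le>k div 2. (a j * (2*t) ^ (k - 2*j)) * (a j' * (2*t) ^ (k - 2*j')))"
    by (simp add: power2_eq_square sum_product)
  also have "\<dots> = (\<Sum>j\<le>k div 2. \<Sum>j'\<le>k div 2. D ^ k * ((a j / D ^ (k - j)) * (a j' / D ^ (k - j')) * 4 ^ (k - j - j') * (D * t\<^sup>2) ^ (k - j - j')))"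
  proof (intro sum.cong refl)
    fix j j' assume j: "j \<in> {..k div 2}" and j': "j' \<in> {..k div 2}"
    then have jk: "2*j \<le> k" "2*j' \<le> k" by auto
    define l where "l = k - j - j'"
    have e1: "k - 2*j + (k - 2*j') = 2 * l" unfolding l_def using jk by simp
    have e2: "k + l = (k - j) + (k - j')" unfolding l_def using jk by simp
    have p: "(2*t) ^ (k - 2*j) * (2*t) ^ (k - 2*j') = (2*t) ^ (2*l)"
      by (simp only: power_add[symmetric] e1)
    have "(a j * (2*t) ^ (k - 2*j)) * (a j' * (2*t) ^ (k - 2*j')) = a j * a j' * ((2*t) ^ (k - 2*j) * (2*t) ^ (k - 2*j'))"
      by (simp add: mult_ac)
    also have "\<dots> = a j * a j' * (2*t) ^ (2*l)" by (simp only: p)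
    also have "\<dots> = a j * a j' * 4 ^ l * (t\<^sup>2) ^ l"
      by (simp add: power_mult power_mult_distrib)
    also have "\<dots> = D ^ k * ((a j / D ^ (k - j)) * (a j' / D ^ (k - j')) * 4 ^ l * (D * t\<^sup>2) ^ l)"
    proof -
      have "D ^ k * D ^ l = D ^ (k - j) * D ^ (k - j')" by (simp add: power_add[symmetric] e2)
      then show ?thesis using D by (simp add: field_simps power_mult_distrib)
    qed
    finally show "(a j * (2*t) ^ (k - 2*j)) * (a j' * (2*t) ^ (k - 2*j')) =
       D ^ k * ((a j / D ^ (k - j)) * (a j' / D ^ (k - j')) * 4 ^ (k - j - j') * (D * t\<^sup>2) ^ (k - j - j'))"
      unfolding l_def .
  qed
  also have "\<dots> = D ^ k * poly (Qp k (\<lambda>j. a j / D ^ (k - j))) (D * t\<^sup>2)"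
    unfolding Qp_def by (simp add: poly_sum poly_monom sum_distrib_left)
  finally show ?thesis .
qed

lemma degree_Qp: "degree (Qp k a) \<le> k"
  unfolding Qp_def
proof (intro degree_sum_le)
  fix j j' show "degree (monom (a j * a j' * 4 ^ (k - j - j')) (k - j - j')) \<le> k"
    using degree_monom_le[of "a j * a j' * 4 ^ (k - j - j')" "k - j - j'"] by simp
qed simp_all

lemma degree_Qp_pow: "degree (Qp k a ^ m) \<le> m * k"
  using degree_power_le[of "Qp k a" m] degree_Qp[of k a]
  by (metis le_trans mult.commute mult_le_mono1)

lemma poly_expand:
  fixes p :: "real poly"
  assumes "degree p \<le> N"
  shows "poly p x = (\<Sum>i\<le>N. coeff p i * x ^ i)"
proof -
  have "poly p x = (\<Sum>i\<le>degree p. coeff p i * x ^ i)" by (rule poly_altdef)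
  also have "\<dots> = (\<Sum>i\<le>N. coeff p i * x ^ i)"
    using assms by (intro sum.mono_neutral_left) (auto simp: coeff_eq_0)
  finally show ?thesis .
qed

lemma tendsto_coeff_Qp:
  fixes F :: "'b filter"
  assumes "\<And>j. ((\<lambda>D. a D j) \<longlongrightarrow> b j) F"
  shows "((\<lambda>D. coeff (Qp k (a D)) l) \<longlongrightarrow> coeff (Qp k b) l) F"
  unfolding Qp_def coeff_sum coeff_monom
  by (intro tendsto_sum) (auto intro!: tendsto_intros assms)

lemma tendsto_coeff_pow:
  fixes F :: "'b filter" and p :: "'b \<Rightarrow> real poly"
  assumes "\<And>l. ((\<lambda>D. coeff (p D) l) \<longlongrightarrow> coeff q l) F"
  shows "((\<lambda>D. coeff (p D ^ m) l) \<longlongrightarrow> coeff (q ^ m) l) F"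
proof (induction m arbitrary: l)
  case 0
  then show ?case by (simp add: coeff_1)
next
  case (Suc m)
  show ?case
    unfolding power_Suc coeff_mult
    by (intro tendsto_sum tendsto_mult assms Suc)
qed

definition Acoef :: "nat \<Rightarrow> real \<Rightarrow> nat \<Rightarrow> real" where
  "Acoef k lam j = (-1)^j * pochhammer lam (k - j) / (fact j * fact (k - 2*j))"

definition Bc :: "nat \<Rightarrow> real \<Rightarrow> nat \<Rightarrow> real" where
  "Bc k D j = Acoef k ((D - 1) / 2) j / D ^ (k - j)"

definition beta :: "nat \<Rightarrow> nat \<Rightarrow> real" where
  "beta k j = (-1)^j / (fact j * fact (k - 2*j) * 2 ^ (k - j))"

lemma gegenbauer_alt: "gegenbauer k lam x = (\<Sum>j\<le>k div 2. Acoef k lam j * (2*x) ^ (k - 2*j))"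
  unfolding gegenbauer_def Acoef_def ..

lemma gg_pow:
  assumes D: "D > 0"
  shows "(gegenbauer k ((D - 1) / 2) t) ^ (2*m) = D ^ (m*k) * poly (Qp k (Bc k D) ^ m) (D * t\<^sup>2)"
proof -
  have "(gegenbauer k ((D - 1) / 2) t)\<^sup>2 = D ^ k * poly (Qp k (Bc k D)) (D * t\<^sup>2)"
    unfolding gegenbauer_alt using sq_expand[OF D, where a="Acoef k ((D - 1) / 2)" and k=k and t=t]
    by (simp add: Bc_def[abs_def])
  then have "((gegenbauer k ((D - 1) / 2) t)\<^sup>2) ^ m = (D ^ k * poly (Qp k (Bc k D)) (D * t\<^sup>2)) ^ m" by simp
  also have "\<dots> = (D ^ k) ^ m * poly (Qp k (Bc k D) ^ m) (D * t\<^sup>2)"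
    by (simp add: power_mult_distrib poly_power)
  also have "(D ^ k) ^ m = D ^ (m*k)" by (simp add: power_mult[symmetric] mult.commute)
  also have "((gegenbauer k ((D - 1) / 2) t)\<^sup>2) ^ m = (gegenbauer k ((D - 1) / 2) t) ^ (2*m)"
    by (simp add: power_mult)
  finally show ?thesis .
qed

lemma poch_ratio_lim: "((\<lambda>D::real. pochhammer ((D - 1) / 2) n / D ^ n) \<longlongrightarrow> (1/2) ^ n) at_top"
proof -
  have eq: "eventually (\<lambda>D::real. pochhammer ((D - 1) / 2) n / D ^ n = (\<Prod>i\<in>{0..<n}. ((D - 1) / 2 + real i) / D)) at_top"
    using eventually_gt_at_top[of 0]
    by eventually_elim (simp add: pochhammer_prod prod_dividef)
  have "((\<lambda>D::real. \<Prod>i\<in>{0..<n}. ((D - 1) / 2 + real i) / D) \<longlongrightarrow> (\<Prod>i\<in>{0..<n}. 1/2)) at_top"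
  proof (intro tendsto_prod)
    fix i :: nat
    have "((\<lambda>D::real. 1/2 + (real i - 1/2) * (1 / D)) \<longlongrightarrow> 1/2 + (real i - 1/2) * 0) at_top"
      by (intro tendsto_intros tendsto_divide_0[OF tendsto_const] filterlim_at_top_imp_at_infinity filterlim_ident)
    moreover have "eventually (\<lambda>D::real. 1/2 + (real i - 1/2) * (1 / D) = ((D - 1) / 2 + real i) / D) at_top"
      using eventually_gt_at_top[of 0] by eventually_elim (simp add: field_simps)
    ultimately show "((\<lambda>D::real. ((D - 1) / 2 + real i) / D) \<longlongrightarrow> 1/2) at_top"
      by (simp add: tendsto_cong)
  qed
  then show ?thesis using eq by (simp add: tendsto_cong)
qed

lemma Bc_lim: "((\<lambda>D. Bc k D j) \<longlongrightarrow> beta k j) at_top"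
proof -
  have "((\<lambda>D::real. (-1)^j / (fact j * fact (k - 2*j)) * (pochhammer ((D - 1) / 2) (k - j) / D ^ (k - j)))
      \<longlongrightarrow> (-1)^j / (fact j * fact (k - 2*j)) * (1/2) ^ (k - j)) at_top"
    by (intro tendsto_intros poch_ratio_lim)
  moreover have "(-1)^j / (fact j * fact (k - 2*j)) * (1/2) ^ (k - j) = beta k j"
    unfolding beta_def by (simp add: power_one_over)
  ultimately show ?thesis unfolding Bc_def Acoef_def by (simp add: mult_ac)
qed

lemma coeff_lim: "((\<lambda>D. coeff (Qp k (Bc k D) ^ m) i) \<longlongrightarrow> coeff (Qp k (beta k) ^ m) i) at_top"
  by (intro tendsto_coeff_pow tendsto_coeff_Qp Bc_lim)

definition mu :: "nat \<Rightarrow> real" where "mu i = fact (2*i) / (2^i * fact i)"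

definition climit :: "nat \<Rightarrow> nat \<Rightarrow> real" where
  "climit k m = (\<Sum>i\<le>m*k. coeff (Qp k (beta k) ^ m) i * mu i)"

definition Hp :: "nat \<Rightarrow> real poly" where
  "Hp k = (\<Sum>j\<le>k div 2. monom (beta k j * 2 ^ (k - 2*j)) (k - 2*j))"

lemma poly_Hp: "poly (Hp k) z = (\<Sum>j\<le>k div 2. beta k j * (2*z) ^ (k - 2*j))"
  unfolding Hp_def by (simp add: poly_sum poly_monom power_mult_distrib mult_ac)

lemma Hp_nz: "Hp k \<noteq> 0"
proof -
  have "coeff (Hp k) k = (\<Sum>j\<le>k div 2. (if j = 0 then beta k j * 2 ^ (k - 2*j) else 0))"
    unfolding Hp_def coeff_sum coeff_monom
  proof (intro sum.cong refl)
    fix j assume "j \<in> {..k div 2}"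
    then have "2*j \<le> k" by auto
    then have "(k - 2*j = k) = (j = 0)" by auto
    then show "(if k - 2*j = k then beta k j * 2 ^ (k - 2*j) else 0) = (if j = 0 then beta k j * 2 ^ (k - 2*j) else 0)"
      by simp
  qed
  also have "\<dots> = beta k 0 * 2 ^ k" by (simp add: sum.delta')
  also have "\<dots> \<noteq> 0" by (simp add: beta_def)
  finally show ?thesis by auto
qed

lemma sq_pow: "((z::real)\<^sup>2) ^ i = z ^ (2*i)" by (simp add: power_mult)

lemma climit_integral:
  "(\<integral>z. std_normal_density z * (poly (Hp k) z) ^ (2*m) \<partial>lborel) = climit k m"
proof -
  have "(poly (Hp k) z) ^ (2*m) = (\<Sum>i\<le>m*k. coeff (Qp k (beta k) ^ m) i * z ^ (2*i))" for z
  proof -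
    have "(poly (Hp k) z)\<^sup>2 = poly (Qp k (beta k)) (z\<^sup>2)"
      unfolding poly_Hp using sq_expand[where D=1 and a="beta k" and k=k and t=z] by simp
    then have "(poly (Hp k) z) ^ (2*m) = poly (Qp k (beta k) ^ m) (z\<^sup>2)"
      by (simp add: power_mult poly_power)
    also have "\<dots> = (\<Sum>i\<le>m*k. coeff (Qp k (beta k) ^ m) i * (z\<^sup>2) ^ i)"
      by (rule poly_expand[OF degree_Qp_pow])
    finally show ?thesis by (simp only: sq_pow)
  qed
  then have "(\<integral>z. std_normal_density z * (poly (Hp k) z) ^ (2*m) \<partial>lborel)
      = (\<integral>z. (\<Sum>i\<le>m*k. coeff (Qp k (beta k) ^ m) i * (std_normal_density z * z ^ (2*i))) \<partial>lborel)"
    by (simp add: sum_distrib_left mult_ac)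
  also have "\<dots> = (\<Sum>i\<le>m*k. \<integral>z. coeff (Qp k (beta k) ^ m) i * (std_normal_density z * z ^ (2*i)) \<partial>lborel)"
    by (simp add: integrable_std_normal_moment)
  also have "\<dots> = climit k m"
    unfolding climit_def mu_def by (simp add: integral_std_normal_moment_even)
  finally show ?thesis .
qed

lemma climit_nz: "climit k m \<noteq> 0"
proof
  assume c0: "climit k m = 0"
  define f where "f z = std_normal_density z * (poly (Hp k) z) ^ (2*m)" for z
  have int: "integrable lborel f"
  proof -
    have "f = (\<lambda>z. \<Sum>i\<le>m*k. coeff (Qp k (beta k) ^ m) i * (std_normal_density z * z ^ (2*i)))"
    proof
      fix z
      have "(poly (Hp k) z)\<^sup>2 = poly (Qp k (beta k)) (z\<^sup>2)"
        unfolding poly_Hp using sq_expand[where D=1 and a="beta k" and k=k and t=z] by simp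
      then have "(poly (Hp k) z) ^ (2*m) = poly (Qp k (beta k) ^ m) (z\<^sup>2)"
        by (simp add: power_mult poly_power)
      also have "\<dots> = (\<Sum>i\<le>m*k. coeff (Qp k (beta k) ^ m) i * (z\<^sup>2) ^ i)"
        by (rule poly_expand[OF degree_Qp_pow])
      finally have "(poly (Hp k) z) ^ (2*m) = (\<Sum>i\<le>m*k. coeff (Qp k (beta k) ^ m) i * z ^ (2*i))"
        by (simp only: sq_pow)
      then show "f z = (\<Sum>i\<le>m*k. coeff (Qp k (beta k) ^ m) i * (std_normal_density z * z ^ (2*i)))"
        unfolding f_def by (simp add: sum_distrib_left mult_ac)
    qed
    then show ?thesis by (simp add: integrable_std_normal_moment)
  qed
  have nn: "AE z in lborel. 0 \<le> f z" unfolding f_def by (simp add: zero_le_even_power)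
  have "integral\<^sup>L lborel f = 0" using c0 climit_integral[of k m] unfolding f_def by simp
  then have ae0: "AE z in lborel. f z = 0" using integral_nonneg_eq_0_iff_AE[OF int nn] by simp
  have fin: "finite {z. poly (Hp k) z = 0}" by (rule poly_roots_finite[OF Hp_nz])
  then have "{z. poly (Hp k) z = 0} \<in> null_sets lborel"
    by (intro countable_imp_null_set_lborel countable_finite)
  then have aen: "AE z in lborel. z \<notin> {z. poly (Hp k) z = 0}" by (rule AE_not_in)
  have pos: "f z > 0" if "z \<notin> {z. poly (Hp k) z = 0}" for z
  proof -
    have "poly (Hp k) z \<noteq> 0" using that by simp
    moreover have "std_normal_density z > 0" by (simp add: normal_density_pos)
    ultimately show "f z > 0" unfolding f_def by (simp add: zero_less_power_eq)
  qed
  have "AE z in lborel. f z = 0 \<and> z \<notin> {z. poly (Hp k) z = 0}"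
    using ae0 aen by (rule AE_conjI)
  then obtain N where N: "{x\<in>space lborel. \<not> (f x = 0 \<and> x \<notin> {z. poly (Hp k) z = 0})} \<subseteq> N"
      "emeasure lborel N = 0" "N \<in> sets lborel"
    by (rule AE_E)
  have "space lborel \<subseteq> N"
  proof
    fix x :: real assume "x \<in> space lborel"
    moreover have "\<not> (f x = 0 \<and> x \<notin> {z. poly (Hp k) z = 0})" using pos[of x] by (metis less_irrefl)
    ultimately show "x \<in> N" using N(1) by blast
  qed
  then have "emeasure lborel (UNIV::real set) \<le> emeasure lborel N"
    using N(3) by (intro emeasure_mono) auto
  then show False using N(2) by simp
qed

lemma choose_poch:
  "real ((d + r - 1) choose (d - 1)) = pochhammer (real d) r / fact r" if "d \<ge> 1"
proof -
  have "(d + r - 1) choose (d - 1) = (d + r - 1) choose r"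
  proof -
    have "d - 1 \<le> d + r - 1" by simp
    then have "(d + r - 1) choose (d - 1) = (d + r - 1) choose (d + r - 1 - (d - 1))"
      by (rule binomial_symmetric)
    also have "d + r - 1 - (d - 1) = r" using that by simp
    finally show ?thesis .
  qed
  also have "real ((d + r - 1) choose r) = pochhammer (real (d + r - 1) - real r + 1) r / fact r"
    by (simp add: binomial_gbinomial gbinomial_pochhammer')
  also have "real (d + r - 1) - real r + 1 = real d" using that by (simp add: of_nat_diff)
  finally show ?thesis .
qed

lemma dim_harm_eq:
  assumes d: "d \<ge> 2" and k: "k \<ge> 1"
  shows "dim_harm k d = pochhammer (real d) (k - 1) / fact (k - 1) + pochhammer (real d) k / fact k"
proof -
  have "d + k - 2 = d + (k - 1) - 1" using k d by simp
  then show ?thesis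
    unfolding dim_harm_def using choose_poch[of d "k - 1"] choose_poch[of d k] d by simp
qed

lemma poch_over_pow: "((\<lambda>D::real. pochhammer D r / D ^ r) \<longlongrightarrow> 1) at_top"
proof -
  have eq: "eventually (\<lambda>D::real. pochhammer D r / D ^ r = (\<Prod>i\<in>{0..<r}. (D + real i) / D)) at_top"
    using eventually_gt_at_top[of 0]
    by eventually_elim (simp add: pochhammer_prod prod_dividef)
  have "((\<lambda>D::real. \<Prod>i\<in>{0..<r}. (D + real i) / D) \<longlongrightarrow> (\<Prod>i\<in>{0..<r}. 1)) at_top"
  proof (intro tendsto_prod)
    fix i :: nat
    have "((\<lambda>D::real. 1 + real i * (1 / D)) \<longlongrightarrow> 1 + real i * 0) at_top"
      by (intro tendsto_intros tendsto_divide_0[OF tendsto_const] filterlim_at_top_imp_at_infinity filterlim_ident)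
    moreover have "eventually (\<lambda>D::real. 1 + real i * (1 / D) = (D + real i) / D) at_top"
      using eventually_gt_at_top[of 0] by eventually_elim (simp add: field_simps)
    ultimately show "((\<lambda>D::real. (D + real i) / D) \<longlongrightarrow> 1) at_top"
      by (simp add: tendsto_cong)
  qed
  then show ?thesis using eq by (simp add: tendsto_cong)
qed

lemma filterlim_minus_one: "filterlim (\<lambda>x::real. x - 1) at_top at_top"
  using filterlim_tendsto_add_at_top[OF tendsto_const[of "-1"] filterlim_ident] by simp

lemma ratio_aux:
  fixes P1 P F Dk1 D c k :: real
  assumes "D > 0" "F > 0" "Dk1 > 0" "k > 0" "c > 0"
  shows "(k * ((P1 / Dk1) * (1 / D)) + P / (Dk1 * D)) / c = (P1 / F + P / (k * F)) / (c * (Dk1 * D) / (k * F))"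
proof -
  have "(P1 / F + P / (k * F)) = (k * P1 + P) / (k * F)" using assms by (simp add: field_simps)
  moreover have "(k * ((P1 / Dk1) * (1 / D)) + P / (Dk1 * D)) = (k * P1 + P) / (Dk1 * D)" using assms by (simp add: field_simps)
  ultimately show ?thesis using assms by (simp add: field_simps)
qed

lemma dim_ratio_lim:
  assumes k: "k \<ge> 1"
  shows "((\<lambda>D::real. (pochhammer D (k - 1) / fact (k - 1) + pochhammer D k / fact k) /
              ((1 + 2 * real k / (D - 1)) * D ^ k / fact k)) \<longlongrightarrow> 1) at_top"
proof -
  have lim: "((\<lambda>D::real. (real k * ((pochhammer D (k - 1) / D ^ (k - 1)) * (1 / D)) + pochhammer D k / D ^ k) /
              (1 + 2 * real k * (1 / (D - 1)))) \<longlongrightarrow> (real k * (1 * 0) + 1) / (1 + 2 * real k * 0)) at_top"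
    by (intro tendsto_intros poch_over_pow tendsto_divide_0[OF tendsto_const]
          filterlim_at_top_imp_at_infinity filterlim_ident filterlim_minus_one)
       auto
  have eq: "eventually (\<lambda>D::real. (real k * ((pochhammer D (k - 1) / D ^ (k - 1)) * (1 / D)) + pochhammer D k / D ^ k) /
              (1 + 2 * real k * (1 / (D - 1))) =
           (pochhammer D (k - 1) / fact (k - 1) + pochhammer D k / fact k) /
              ((1 + 2 * real k / (D - 1)) * D ^ k / fact k)) at_top"
    using eventually_gt_at_top[of 1]
  proof eventually_elim
    case (elim D)
    have fk: "fact k = real k * fact (k - 1)" using k by (simp add: fact_reduce)
    have pk: "D ^ k = D ^ (k - 1) * D" using k by (metis Suc_diff_1 less_le_trans zero_less_one power_Suc2 le_imp_less_Suc order.refl less_Suc_eq_le not_less_eq_eq)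
    have pos: "1 + 2 * real k / (D - 1) > 0" using elim by (simp add: add_pos_nonneg)
    have "fact (k - 1) > (0::real)" by simp
    moreover have "D ^ (k - 1) > 0" using elim by simp
    moreover have "1 + 2 * real k * (1 / (D - 1)) = 1 + 2 * real k / (D - 1)" by simp
    ultimately show ?case using elim pos k unfolding fk pk
      by (subst ratio_aux[symmetric]) auto
  qed
  show ?thesis using lim eq by (simp add: tendsto_cong)
qed

lemma tt_pow_integral:
  "integrable (sphere_unif d \<Otimes>\<^sub>M sphere_unif d) (\<lambda>p. tt d (fst p) (snd p) ^ (2*i)) \<and>
   integral\<^sup>L (sphere_unif d \<Otimes>\<^sub>M sphere_unif d) (\<lambda>p. tt d (fst p) (snd p) ^ (2*i)) = mom_val d i"
proof -
  have "mom_val d i \<ge> 0" unfolding mom_val_def using Rq_pos[of d i] by simp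
  then show ?thesis
    using pair_moment[of d i]
    by (subst nn_integral_eq_integrable[symmetric]) (auto simp: zero_le_even_power)
qed

lemma gm_expand:
  assumes d: "d \<ge> 1"
  shows "gegen_moment d k m = real d ^ (m*k) *
     (\<Sum>i\<le>m*k. coeff (Qp k (Bc k (real d)) ^ m) i * (real d ^ i * mom_val d i))"
proof -
  define D where "D = real d"
  have D: "D > 0" using d unfolding D_def by simp
  define c where "c i = coeff (Qp k (Bc k D) ^ m) i" for i
  have "gegen_moment d k m = (\<integral>p. (\<Sum>i\<le>m*k. D ^ (m*k) * c i * D ^ i * tt d (fst p) (snd p) ^ (2*i))
     \<partial>(sphere_unif d \<Otimes>\<^sub>M sphere_unif d))"
    unfolding gegen_moment_def
  proof (intro Bochner_Integration.integral_cong refl)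
    fix p
    have "(gegenbauer k ((D - 1) / 2) (tt d (fst p) (snd p))) ^ (2*m)
        = D ^ (m*k) * poly (Qp k (Bc k D) ^ m) (D * (tt d (fst p) (snd p))\<^sup>2)"
      by (rule gg_pow[OF D])
    also have "\<dots> = D ^ (m*k) * (\<Sum>i\<le>m*k. c i * (D * (tt d (fst p) (snd p))\<^sup>2) ^ i)"
      unfolding c_def by (subst poly_expand[OF degree_Qp_pow]) (rule refl)
    also have "\<dots> = (\<Sum>i\<le>m*k. D ^ (m*k) * c i * D ^ i * tt d (fst p) (snd p) ^ (2*i))"
      by (simp add: sum_distrib_left power_mult_distrib sq_pow mult_ac)
    finally show "(gegenbauer k ((real d - 1) / 2) (\<Sum>i\<le>d. fst p i * snd p i)) ^ (2*m)
        = (\<Sum>i\<le>m*k. D ^ (m*k) * c i * D ^ i * tt d (fst p) (snd p) ^ (2*i))"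
      unfolding D_def tt_def .
  qed
  also have "\<dots> = (\<Sum>i\<le>m*k. \<integral>p. D ^ (m*k) * c i * D ^ i * tt d (fst p) (snd p) ^ (2*i) \<partial>(sphere_unif d \<Otimes>\<^sub>M sphere_unif d))"
    by (intro Bochner_Integration.integral_sum integrable_mult_right) (use tt_pow_integral in blast)
  also have "\<dots> = (\<Sum>i\<le>m*k. D ^ (m*k) * c i * D ^ i * mom_val d i)"
    using tt_pow_integral by (simp add: mult.assoc)
  also have "\<dots> = D ^ (m*k) * (\<Sum>i\<le>m*k. c i * (D ^ i * mom_val d i))"
    by (simp add: sum_distrib_left mult_ac)
  finally show ?thesis unfolding c_def D_def .
qed

lemma mom_scaled_lim:
  "((\<lambda>d. real d ^ i * mom_val d i) \<longlongrightarrow> mu i) sequentially"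
proof -
  have eq: "real d ^ i * mom_val d i = mu i * (\<Prod>j<i. real d / (real d + 1 + 2 * real j))" for d
  proof -
    have "Rq d i * 2 ^ i = (\<Prod>j<i. (real d + 1 + 2 * real j))"
      unfolding Rq_def by (simp add: prod_dividef add_ac)
    then have "mom_val d i = mu i / (\<Prod>j<i. (real d + 1 + 2 * real j))"
      unfolding mom_val_def mu_def by simp
    moreover have "real d ^ i / (\<Prod>j<i. (real d + 1 + 2 * real j)) = (\<Prod>j<i. real d / (real d + 1 + 2 * real j))"
      by (simp add: prod_dividef)
    ultimately show ?thesis by (simp add: field_simps)
  qed
  have "((\<lambda>d. mu i * (\<Prod>j<i. real d / (real d + 1 + 2 * real j))) \<longlongrightarrow> mu i * (\<Prod>j<i. 1)) sequentially"
  proof (intro tendsto_mult tendsto_const tendsto_prod)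
    fix j :: nat
    have "((\<lambda>d::nat. 1 / (1 + (1 + 2 * real j) * (1 / real d))) \<longlongrightarrow> 1 / (1 + (1 + 2 * real j) * 0)) sequentially"
      by (intro tendsto_intros tendsto_divide_0[OF tendsto_const] filterlim_at_top_imp_at_infinity filterlim_real_sequentially) auto
    moreover have "eventually (\<lambda>d::nat. 1 / (1 + (1 + 2 * real j) * (1 / real d)) = real d / (real d + 1 + 2 * real j)) sequentially"
      using eventually_gt_at_top[of "0::nat"] by eventually_elim (simp add: field_simps)
    ultimately show "((\<lambda>d. real d / (real d + 1 + 2 * real j)) \<longlongrightarrow> 1) sequentially"
      by (simp add: tendsto_cong)
  qed
  then show ?thesis by (simp add: eq)
qed

theorem lemma1:
  fixes d :: "nat \<Rightarrow> nat" and k m :: nat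
  assumes "\<And>n. d n \<ge> 2"
    and "filterlim d at_top sequentially"
    and "k \<ge> 1" and "m \<ge> 1"
  shows "(\<exists>c::real. c \<noteq> 0 \<and>
            ((\<lambda>n. gegen_moment (d n) k m / real (d n) ^ (m * k)) \<longlongrightarrow> c) sequentially)
       \<and> ((\<lambda>n. dim_harm k (d n) /
              ((1 + 2 * real k / (real (d n) - 1)) * real (d n) ^ k / fact k))
           \<longlongrightarrow> 1) sequentially"
proof
  have rd: "filterlim (\<lambda>n. real (d n)) at_top sequentially"
    by (rule filterlim_compose[OF filterlim_real_sequentially assms(2)])
  show "\<exists>c::real. c \<noteq> 0 \<and> ((\<lambda>n. gegen_moment (d n) k m / real (d n) ^ (m * k)) \<longlongrightarrow> c) sequentially"
  proof (intro exI conjI)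
    show "climit k m \<noteq> 0" by (rule climit_nz)
    have eq: "gegen_moment (d n) k m / real (d n) ^ (m * k) =
        (\<Sum>i\<le>m*k. coeff (Qp k (Bc k (real (d n))) ^ m) i * (real (d n) ^ i * mom_val (d n) i))" for n
    proof -
      have "d n \<ge> 1" using assms(1)[of n] by simp
      then show ?thesis by (simp add: gm_expand)
    qed
    have "((\<lambda>n. \<Sum>i\<le>m*k. coeff (Qp k (Bc k (real (d n))) ^ m) i * (real (d n) ^ i * mom_val (d n) i))
        \<longlongrightarrow> (\<Sum>i\<le>m*k. coeff (Qp k (beta k) ^ m) i * mu i)) sequentially"
    proof (intro tendsto_sum tendsto_mult)
      fix i
      show "((\<lambda>n. coeff (Qp k (Bc k (real (d n))) ^ m) i) \<longlongrightarrow> coeff (Qp k (beta k) ^ m) i) sequentially"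
        by (rule filterlim_compose[OF coeff_lim rd])
      show "((\<lambda>n. real (d n) ^ i * mom_val (d n) i) \<longlongrightarrow> mu i) sequentially"
        by (rule filterlim_compose[OF mom_scaled_lim[of i] assms(2)])
    qed
    then show "((\<lambda>n. gegen_moment (d n) k m / real (d n) ^ (m * k)) \<longlongrightarrow> climit k m) sequentially"
      unfolding eq climit_def .
  qed
  show "((\<lambda>n. dim_harm k (d n) / ((1 + 2 * real k / (real (d n) - 1)) * real (d n) ^ k / fact k)) \<longlongrightarrow> 1) sequentially"
  proof -
    have "((\<lambda>n. (pochhammer (real (d n)) (k - 1) / fact (k - 1) + pochhammer (real (d n)) k / fact k) /
              ((1 + 2 * real k / (real (d n) - 1)) * real (d n) ^ k / fact k)) \<longlongrightarrow> 1) sequentially"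
      by (rule filterlim_compose[OF dim_ratio_lim[OF assms(3)] rd])
    moreover have "dim_harm k (d n) = pochhammer (real (d n)) (k - 1) / fact (k - 1) + pochhammer (real (d n)) k / fact k" for n
      by (rule dim_harm_eq[OF assms(1) assms(3)])
    ultimately show ?thesis by simp
  qed
qed

end
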